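(* Let $X_\sigma$ be the root monoid associated with a cone $\sigma$, a $k$-dimensional regular face $\tau$ with primitive ray generators $p_1,\ldots,p_k$, and a set of Demazure roots $\{e_1^{(r)},e_2^{(r)}\}_{r=1}^k$ compatible with $\tau$. Let $\gamma$ be a face of $\sigma$ and let $E_\gamma$ be the set of idempotents ($x*x=x$) lying in the orbit $O_\gamma$. Then: (1) if $\tau\subseteq\gamma$, then $E_\gamma=\{x_\gamma\}$; (2) if there exists $r\in\{1,\ldots,k\}$ with $p_r\notin\gamma$ such that either both $e_1^{(r)},e_2^{(r)}\notin\gamma^\perp$ or both $e_1^{(r)},e_2^{(r)}\in\gamma^\perp$, then $E_\gamma=\varnothing$; (3) if for every $r\in\{1,\ldots,k\}$ with $p_r\notin\gamma$ exactly one of $e_1^{(r)},e_2^{(r)}$ lies in $\gamma^\perp$, then $E_\gamma=\{x\in O_\gamma:\chi^u(x)=1\ \text{for all } u\in\operatorname{cone}(\tau,\gamma)^\perp\cap S_\sigma\}$.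
   Context: $\mathbb{K}$ algebraically closed of characteristic zero; $N$ a lattice, $M$ its dual, $\sigma\subseteq N_\mathbb{Q}$ a strongly convex rational polyhedral cone, $S_\sigma=\sigma^\vee\cap M$, $X_\sigma=\operatorname{Spec}\bigoplus_{u\in S_\sigma}\mathbb{K}\chi^u$; points of $X_\sigma$ are semigroup homomorphisms $S_\sigma\to(\mathbb{K},\cdot)$. For a face $\gamma$ of $\sigma$, $x_\gamma$ is the point with $\chi^u(x_\gamma)=1$ if $u\in\gamma^\perp$ and $0$ otherwise, and $O_\gamma$ is the torus orbit of $x_\gamma$, i.e. the set of points $x$ with $\chi^u(x)\ne0$ iff $u\in\gamma^\perp$. $\operatorname{cone}(\tau,\gamma)$ is the cone generated by $\tau$ and $\gamma$. Regular face: primitive ray generators are part of a basis of $N$. Demazure root for a ray generator $p_i$ of $\sigma$: $e\in M$ with $\langle p_i,e\rangle=-1$, $\langle p_j,e\rangle\ge0$ for the other ray generators $p_j$. Compatibility with $\tau$: $\langle p_s,e_1^{(r)}\rangle=\langle p_s,e_2^{(r)}\rangle=-\delta_{rs}$, $r,s=1,\ldots,k$. The root monoid is $X_\sigma$ with multiplication $*$ given by $\chi^u(x*y)=\sum_{\bar i+\bar j=\langle\bar p,u\rangle}\prod_{r}\binom{\langle p_r,u\rangle}{i_r}\chi^{u+\sum_ri_re_2^{(r)}}(x)\,\chi^{u+\sum_rj_re_1^{(r)}}(y)$, $u\in S_\sigma$, where $\langle\bar p,u\rangle=(\langle p_1,u\rangle,\ldots,\langle p_k,u\rangle)$ and $\bar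 i,\bar j\in\mathbb{Z}_{\ge0}^k$ (the dual of the comultiplication $\chi^u\mapsto\chi^u\otimes\chi^u\prod_r(1\otimes\chi^{e_1^{(r)}}+\chi^{e_2^{(r)}}\otimes1)^{\langle p_r,u\rangle}$). *)

theory Defs
  imports "HOL-Analysis.Analysis" "HOL-Library.FuncSet" "HOL-Computational_Algebra.Polynomial"
begin

text \<open>The lattice N is modelled as int^'n (finite index type 'n), its dual M also as int^'n
  with the standard pairing; N_Q = M_Q = rat^'n.\<close>

definition emb :: "int ^ 'n \<Rightarrow> rat ^ 'n" where
  "emb v = (\<chi> i. of_int (v $ i))"

definition qdot :: "rat ^ 'n::finite \<Rightarrow> rat ^ 'n \<Rightarrow> rat" where
  "qdot v w = (\<Sum>i\<in>UNIV. v $ i * w $ i)"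

definition ipair :: "int ^ 'n::finite \<Rightarrow> int ^ 'n \<Rightarrow> int" where
  "ipair v w = (\<Sum>i\<in>UNIV. v $ i * w $ i)"

definition qcone :: "(rat ^ 'n) set \<Rightarrow> (rat ^ 'n) set" where
  "qcone A = {v. \<exists>F c. finite F \<and> F \<subseteq> A \<and> (\<forall>a\<in>F. 0 \<le> c a) \<and> v = (\<Sum>a\<in>F. c a *s a)}"

definition rat_poly_cone :: "(rat ^ 'n) set \<Rightarrow> bool" where
  "rat_poly_cone \<sigma> \<longleftrightarrow> (\<exists>R :: (int ^ 'n) set. finite R \<and> \<sigma> = qcone (emb ` R))"

definition strongly_convex :: "(rat ^ 'n) set \<Rightarrow> bool" where
  "strongly_convex \<sigma> \<longleftrightarrow> \<sigma> \<inter> uminus ` \<sigma> = {0}"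

definition is_face :: "(rat ^ 'n::finite) set \<Rightarrow> (rat ^ 'n) set \<Rightarrow> bool" where
  "is_face \<sigma> \<gamma> \<longleftrightarrow> (\<exists>m. (\<forall>v\<in>\<sigma>. 0 \<le> qdot v m) \<and> \<gamma> = {v\<in>\<sigma>. qdot v m = 0})"

definition primitive :: "int ^ 'n \<Rightarrow> bool" where
  "primitive p \<longleftrightarrow> p \<noteq> 0 \<and> (\<forall>(m::int) q. p = m *s q \<longrightarrow> m = 1 \<or> m = -1)"

definition prim_ray_gens :: "(rat ^ 'n::finite) set \<Rightarrow> (int ^ 'n) set" where
  "prim_ray_gens \<sigma> = {p. primitive p \<and> is_face \<sigma> (qcone {emb p})}"

definition lattice_basis :: "('n \<Rightarrow> int ^ 'n) \<Rightarrow> bool" where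
  "lattice_basis b \<longleftrightarrow> (\<forall>v::int ^ 'n::finite. \<exists>!c::'n \<Rightarrow> int. v = (\<Sum>i\<in>UNIV. c i *s b i))"

definition part_of_basis :: "(nat \<Rightarrow> int ^ 'n::finite) \<Rightarrow> nat \<Rightarrow> bool" where
  "part_of_basis p k \<longleftrightarrow> (\<exists>b f. lattice_basis b \<and> inj_on f {..<k} \<and> (\<forall>r<k. b (f r) = p r))"

definition Ssg :: "(rat ^ 'n::finite) set \<Rightarrow> (int ^ 'n) set" where
  "Ssg \<sigma> = {u. \<forall>v\<in>\<sigma>. 0 \<le> qdot v (emb u)}"

definition perp :: "(rat ^ 'n::finite) set \<Rightarrow> (int ^ 'n) set" where
  "perp \<gamma> = {u. \<forall>v\<in>\<gamma>. qdot v (emb u) = 0}"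

definition demazure_root :: "(rat ^ 'n::finite) set \<Rightarrow> int ^ 'n \<Rightarrow> int ^ 'n \<Rightarrow> bool" where
  "demazure_root \<sigma> p e \<longleftrightarrow> p \<in> prim_ray_gens \<sigma> \<and> ipair p e = -1 \<and>
     (\<forall>q \<in> prim_ray_gens \<sigma> - {p}. 0 \<le> ipair q e)"

text \<open>Points of X_sigma: monoid homomorphisms S_sigma -> (K,*), extended by 0 outside S_sigma.\<close>
definition Xpts :: "(rat ^ 'n::finite) set \<Rightarrow> (int ^ 'n \<Rightarrow> 'k::field) set" where
  "Xpts \<sigma> = {x. x 0 = 1 \<and> (\<forall>u\<in>Ssg \<sigma>. \<forall>v\<in>Ssg \<sigma>. x (u + v) = x u * x v)
                 \<and> (\<forall>u. u \<notin> Ssg \<sigma> \<longrightarrow> x u = 0)}"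

definition xpt :: "(rat ^ 'n::finite) set \<Rightarrow> (rat ^ 'n) set \<Rightarrow> (int ^ 'n \<Rightarrow> 'k::field)" where
  "xpt \<sigma> \<gamma> = (\<lambda>u. if u \<in> Ssg \<sigma> then (if u \<in> perp \<gamma> then 1 else 0) else 0)"

definition orbit :: "(rat ^ 'n::finite) set \<Rightarrow> (rat ^ 'n) set \<Rightarrow> (int ^ 'n \<Rightarrow> 'k::field) set" where
  "orbit \<sigma> \<gamma> = {x \<in> Xpts \<sigma>. \<forall>u\<in>Ssg \<sigma>. (x u \<noteq> 0 \<longleftrightarrow> u \<in> perp \<gamma>)}"

definition rmul :: "(rat ^ 'n::finite) set \<Rightarrow> (nat \<Rightarrow> int ^ 'n) \<Rightarrow> (nat \<Rightarrow> int ^ 'n) \<Rightarrow>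
     (nat \<Rightarrow> int ^ 'n) \<Rightarrow> nat \<Rightarrow> (int ^ 'n \<Rightarrow> 'k::field) \<Rightarrow> (int ^ 'n \<Rightarrow> 'k) \<Rightarrow> (int ^ 'n \<Rightarrow> 'k)" where
  "rmul \<sigma> p e1 e2 k x y = (\<lambda>u. if u \<in> Ssg \<sigma> then
      (\<Sum>i \<in> PiE {..<k} (\<lambda>r. {..nat (ipair (p r) u)}).
         (\<Prod>r<k. of_nat (nat (ipair (p r) u) choose i r))
         * x (u + (\<Sum>r<k. int (i r) *s e2 r))
         * y (u + (\<Sum>r<k. int (nat (ipair (p r) u) - i r) *s e1 r)))
    else 0)"

definition alg_closed_field :: "'k::field itself \<Rightarrow> bool" where
  "alg_closed_field _ \<longleftrightarrow> (\<forall>q::'k poly. 0 < degree q \<longrightarrow> (\<exists>z. poly q z = 0))"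

end

theory Submission
  imports Defs
begin

lemma qdot_comm: "qdot v w = qdot w v"
  unfolding qdot_def by (simp add: mult.commute)
lemma qdot_add_left: "qdot (a + b) c = qdot a c + qdot b c"
  unfolding qdot_def by (simp add: distrib_right sum.distrib)
lemma qdot_diff_left: "qdot (a - b) c = qdot a c - qdot b c"
  unfolding qdot_def by (simp add: left_diff_distrib sum_subtractf)
lemma qdot_neg_left: "qdot (- a) c = - qdot a c"
  unfolding qdot_def by (simp add: sum_negf)
lemma qdot_scale_left: "qdot (r *s a) c = r * qdot a c"
  unfolding qdot_def by (simp add: sum_distrib_left mult.assoc)
lemma qdot_zero_left[simp]: "qdot 0 c = 0"
  unfolding qdot_def by simp
lemma qdot_sum_left: "qdot (\<Sum>i\<in>I. f i) c = (\<Sum>i\<in>I. qdot (f i) c)"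
  unfolding qdot_def by (simp add: sum_distrib_right sum.swap[of _ I])
lemma qdot_add_right: "qdot c (a + b) = qdot c a + qdot c b"
  unfolding qdot_def by (simp add: distrib_left sum.distrib)
lemma qdot_diff_right: "qdot c (a - b) = qdot c a - qdot c b"
  unfolding qdot_def by (simp add: right_diff_distrib sum_subtractf)
lemma qdot_scale_right: "qdot c (r *s a) = r * qdot c a"
  unfolding qdot_def by (simp add: sum_distrib_left algebra_simps)
lemma qdot_sum_right: "qdot c (\<Sum>i\<in>I. f i) = (\<Sum>i\<in>I. qdot c (f i))"
  unfolding qdot_def by (simp add: sum_distrib_left sum.swap[of _ I])

lemma qdot_self_pos: "b \<noteq> 0 \<Longrightarrow> 0 < qdot b b"
proof -
  assume "b \<noteq> 0"
  then obtain j where j: "b $ j \<noteq> 0" by (auto simp: vec_eq_iff)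
  have "0 < b $ j * b $ j" using j by (auto simp: zero_less_mult_iff linorder_neq_iff)
  also have "\<dots> \<le> (\<Sum>i\<in>UNIV. b $ i * b $ i)"
    by (rule member_le_sum) auto
  finally show ?thesis by (simp add: qdot_def)
qed

lemma emb_add: "emb (u + w) = emb u + emb w"
  by (simp add: emb_def vec_eq_iff)
lemma emb_scale: "emb (c *s u) = of_int c *s emb u"
  by (simp add: emb_def vec_eq_iff)
lemma emb_sum: "emb (\<Sum>i\<in>I. f i) = (\<Sum>i\<in>I. emb (f i))"
  by (simp add: emb_def vec_eq_iff)
lemma qdot_emb: "qdot (emb u) (emb w) = of_int (ipair u w)"
  by (simp add: qdot_def ipair_def emb_def)
lemma ipair_add_right: "ipair p (u + w) = ipair p u + ipair p w"
  by (simp add: ipair_def distrib_left sum.distrib)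
lemma ipair_scale_right: "ipair p (c *s u) = c * ipair p u"
  by (simp add: ipair_def sum_distrib_left algebra_simps)
lemma ipair_sum_right: "ipair p (\<Sum>i\<in>I. f i) = (\<Sum>i\<in>I. ipair p (f i))"
  unfolding ipair_def by (simp add: sum_distrib_left sum.swap[of _ I])

lemma farkas:
  fixes a :: "'i \<Rightarrow> rat ^ 'n::finite" and b :: "rat ^ 'n"
  assumes "finite I"
  shows "(\<exists>x. (\<forall>i\<in>I. qdot (a i) x \<le> 0) \<and> 0 < qdot b x)
       \<or> (\<exists>l. (\<forall>i\<in>I. 0 \<le> l i) \<and> b = (\<Sum>i\<in>I. l i *s a i))"
  using assms
proof (induction I arbitrary: a b rule: finite_induct)
  case empty
  show ?case
  proof (cases "b = 0")
    case True then show ?thesis by auto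
  next
    case False then show ?thesis using qdot_self_pos[of b] by auto
  qed
next
  case (insert j I)
  from insert.IH[of a b] show ?case
  proof
    assume "\<exists>l. (\<forall>i\<in>I. 0 \<le> l i) \<and> b = (\<Sum>i\<in>I. l i *s a i)"
    then obtain l where l: "\<forall>i\<in>I. 0 \<le> l i" "b = (\<Sum>i\<in>I. l i *s a i)" by blast
    have "(\<Sum>i\<in>insert j I. (l(j:=0)) i *s a i) = (\<Sum>i\<in>I. l i *s a i)"
      using insert.hyps by (simp add: vec_eq_iff) (intro allI sum.cong, auto)
    then show ?thesis using l by (intro disjI2 exI[of _ "l(j:=0)"]) auto
  next
    assume "\<exists>x. (\<forall>i\<in>I. qdot (a i) x \<le> 0) \<and> 0 < qdot b x"
    then obtain x where x: "\<forall>i\<in>I. qdot (a i) x \<le> 0" "0 < qdot b x" by blast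
    show ?thesis
    proof (cases "qdot (a j) x \<le> 0")
      case True then show ?thesis using x by (intro disjI1 exI[of _ x]) auto
    next
      case False
      define \<alpha> where "\<alpha> = qdot (a j) x"
      have apos: "0 < \<alpha>" using False by (simp add: \<alpha>_def)
      define a' where "a' i = a i - (qdot (a i) x / \<alpha>) *s a j" for i
      define b' where "b' = b - (qdot b x / \<alpha>) *s a j"
      from insert.IH[of a' b'] show ?thesis
      proof
        assume "\<exists>y. (\<forall>i\<in>I. qdot (a' i) y \<le> 0) \<and> 0 < qdot b' y"
        then obtain y where y: "\<forall>i\<in>I. qdot (a' i) y \<le> 0" "0 < qdot b' y" by blast
        define z where "z = y - (qdot (a j) y / \<alpha>) *s x"
        have zi: "qdot c z = qdot c y - (qdot (a j) y / \<alpha>) * qdot c x" for c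
          by (simp add: z_def qdot_diff_right qdot_scale_right)
        have "qdot (a i) z = qdot (a' i) y" for i
        proof -
          have "qdot (a' i) y = qdot (a i) y - (qdot (a i) x / \<alpha>) * qdot (a j) y"
            by (simp add: a'_def qdot_diff_left qdot_scale_left)
          then show ?thesis by (simp add: zi)
        qed
        moreover have "qdot b z = qdot b' y"
        proof -
          have "qdot b' y = qdot b y - (qdot b x / \<alpha>) * qdot (a j) y"
            by (simp add: b'_def qdot_diff_left qdot_scale_left)
          then show ?thesis by (simp add: zi)
        qed
        moreover have "qdot (a j) z = 0" using apos by (simp add: zi \<alpha>_def)
        ultimately show ?thesis using y by (intro disjI1 exI[of _ z]) auto
      next
        assume "\<exists>l. (\<forall>i\<in>I. 0 \<le> l i) \<and> b' = (\<Sum>i\<in>I. l i *s a' i)"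
        then obtain l where l: "\<forall>i\<in>I. 0 \<le> l i" "b' = (\<Sum>i\<in>I. l i *s a' i)" by blast
        define cj where "cj = (qdot b x - (\<Sum>i\<in>I. l i * qdot (a i) x)) / \<alpha>"
        have "(\<Sum>i\<in>I. l i * qdot (a i) x) \<le> 0"
          using l(1) x(1) by (intro sum_nonpos) (simp add: mult_nonneg_nonpos)
        then have cj0: "0 \<le> cj" using apos x(2) by (simp add: cj_def)
        define l2 where "l2 = l(j := cj)"
        have "b = b' + (qdot b x / \<alpha>) *s a j" by (simp add: b'_def)
        also have "b' = (\<Sum>i\<in>I. l i *s a i) - ((\<Sum>i\<in>I. l i * qdot (a i) x) / \<alpha>) *s a j"
        proof -
          have "b' = (\<Sum>i\<in>I. l i *s a i - (l i * qdot (a i) x / \<alpha>) *s a j)"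
            unfolding l(2) a'_def by (intro sum.cong refl) (simp add: vec_eq_iff algebra_simps)
          also have "\<dots> = (\<Sum>i\<in>I. l i *s a i) - (\<Sum>i\<in>I. (l i * qdot (a i) x / \<alpha>) *s a j)"
            by (simp add: sum_subtractf)
          also have "(\<Sum>i\<in>I. (l i * qdot (a i) x / \<alpha>) *s a j) = ((\<Sum>i\<in>I. l i * qdot (a i) x) / \<alpha>) *s a j"
            by (simp add: vec_eq_iff sum_distrib_right sum_divide_distrib)
          finally show ?thesis .
        qed
        finally have "b = (\<Sum>i\<in>I. l i *s a i) + cj *s a j"
          unfolding cj_def by (simp add: vec_eq_iff diff_divide_distrib algebra_simps)
        also have "\<dots> = (\<Sum>i\<in>insert j I. l2 i *s a i)"
          using insert.hyps by (simp add: l2_def add.commute) (intro sum.cong, auto)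
        finally show ?thesis using l(1) cj0 by (intro disjI2 exI[of _ l2]) (auto simp: l2_def)
      qed
    qed
  qed
qed



lemma qcone_finite:
  assumes "finite A"
  shows "v \<in> qcone A \<longleftrightarrow> (\<exists>c. (\<forall>a\<in>A. 0 \<le> c a) \<and> v = (\<Sum>a\<in>A. c a *s a))"
proof
  assume "v \<in> qcone A"
  then obtain F c where F: "finite F" "F \<subseteq> A" "\<forall>a\<in>F. 0 \<le> c a" "v = (\<Sum>a\<in>F. c a *s a)"
    unfolding qcone_def by blast
  define c' where "c' a = (if a \<in> F then c a else 0)" for a
  have "(\<Sum>a\<in>A. c' a *s a) = (\<Sum>a\<in>F. c' a *s a)"
    using F assms by (intro sum.mono_neutral_right) (auto simp: c'_def vec_eq_iff)
  also have "\<dots> = v" using F by (simp add: c'_def)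
  finally show "\<exists>c. (\<forall>a\<in>A. 0 \<le> c a) \<and> v = (\<Sum>a\<in>A. c a *s a)"
    using F by (intro exI[of _ c']) (auto simp: c'_def)
next
  assume "\<exists>c. (\<forall>a\<in>A. 0 \<le> c a) \<and> v = (\<Sum>a\<in>A. c a *s a)"
  then show "v \<in> qcone A" using assms unfolding qcone_def by blast
qed

lemma qcone_mono: "A \<subseteq> B \<Longrightarrow> qcone A \<subseteq> qcone B"
  unfolding qcone_def by blast

lemma zero_in_qcone: "0 \<in> qcone A"
  unfolding qcone_def by (intro CollectI exI[of _ "{}"]) auto

lemma qcone_single: "qcone {x} = {c *s x | c. 0 \<le> c}"
  by (auto simp: qcone_finite)

lemma sum_indicator_scale:
  fixes t :: rat and A :: "(rat ^ 'n) set"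
  assumes "finite A" "a \<in> A"
  shows "(\<Sum>h\<in>A. (if h = a then t else 0) *s h) = t *s a"
proof -
  have "(\<Sum>h\<in>A. (if h = a then t else 0) *s h) = (\<Sum>h\<in>A. if h = a then t *s h else 0)"
    by (intro sum.cong) (auto simp: vec_eq_iff)
  then show ?thesis using assms by simp
qed

lemma mem_qcone_gen: "finite A \<Longrightarrow> a \<in> A \<Longrightarrow> a \<in> qcone A"
  using sum_indicator_scale[of A a 1]
  by (auto simp: qcone_finite intro!: exI[of _ "\<lambda>h. if h = a then 1 else 0"])

lemma qdot_qcone_nonneg:
  assumes "finite A" "v \<in> qcone A" "\<forall>a\<in>A. 0 \<le> qdot a m"
  shows "0 \<le> qdot v m"
proof -
  obtain c where c: "\<forall>a\<in>A. 0 \<le> c a" "v = (\<Sum>a\<in>A. c a *s a)"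
    using assms qcone_finite by blast
  show ?thesis using c assms(3)
    by (simp add: qdot_sum_left qdot_scale_left sum_nonneg)
qed

lemma qcone_remove:
  assumes A: "finite A" "r \<in> A" "r \<in> qcone (A - {r})"
  shows "qcone A = qcone (A - {r})"
proof
  show "qcone (A - {r}) \<subseteq> qcone A" by (rule qcone_mono) auto
next
  show "qcone A \<subseteq> qcone (A - {r})"
  proof
    fix v assume "v \<in> qcone A"
    then obtain c where c: "\<forall>a\<in>A. 0 \<le> c a" "v = (\<Sum>a\<in>A. c a *s a)"
      using A qcone_finite by blast
    obtain d where d: "\<forall>a\<in>A-{r}. 0 \<le> d a" "r = (\<Sum>a\<in>A-{r}. d a *s a)"
      using A qcone_finite[of "A - {r}" r] by blast
    have "v = c r *s r + (\<Sum>a\<in>A-{r}. c a *s a)"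
      using A c(2) by (simp add: sum.remove)
    also have "\<dots> = (\<Sum>a\<in>A-{r}. (c a + c r * d a) *s a)"
      by (subst d(2)) (simp add: vec_eq_iff sum_distrib_left algebra_simps sum.distrib)
    moreover have "\<forall>a\<in>A-{r}. 0 \<le> c a + c r * d a" using A c(1) d(1) by auto
    ultimately show "v \<in> qcone (A - {r})"
      using A by (subst qcone_finite) (auto intro!: exI[of _ "\<lambda>a. c a + c r * d a"])
  qed
qed

lemma minimal_gen:
  assumes "finite A"
  shows "\<exists>B\<subseteq>A. qcone B = qcone A \<and> (\<forall>r\<in>B. r \<notin> qcone (B - {r}))"
  using assms
proof (induction "card A" arbitrary: A rule: less_induct)
  case less
  show ?case
  proof (cases "\<forall>r\<in>A. r \<notin> qcone (A - {r})")
    case True then show ?thesis by blast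
  next
    case False
    then obtain r where r: "r \<in> A" "r \<in> qcone (A - {r})" by blast
    have "card (A - {r}) < card A" using r less.prems by (intro card_Diff1_less)
    then obtain B where "B \<subseteq> A - {r}" "qcone B = qcone (A - {r})" "\<forall>r\<in>B. r \<notin> qcone (B - {r})"
      using less.hyps[of "A - {r}"] less.prems by auto
    then show ?thesis using qcone_remove[OF less.prems r] by (intro exI[of _ B]) auto
  qed
qed

lemma pointed:
  assumes B: "finite B" and sc: "strongly_convex (qcone B)"
    and nu: "\<forall>h\<in>B. 0 \<le> \<nu> h" "(\<Sum>h\<in>B. \<nu> h *s h) = 0" and g: "g \<in> B" "0 < \<nu> g"
  shows "g = 0"
proof -
  define x where "x = \<nu> g *s g"
  define y where "y = (\<Sum>h\<in>B-{g}. \<nu> h *s h)"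
  have xy: "x + y = 0" using nu(2) B g by (simp add: x_def y_def sum.remove)
  have "x \<in> qcone B" using B g nu(1) sum_indicator_scale[of B g "\<nu> g"]
    by (subst qcone_finite) (auto simp: x_def
        intro!: exI[of _ "\<lambda>h. if h = g then \<nu> g else 0"])
  moreover have "y \<in> qcone B"
    using qcone_mono[of "B - {g}" B] B nu(1) qcone_finite[of "B - {g}" y] y_def by auto
  then have "x \<in> uminus ` qcone B" using xy
    by (intro image_eqI[of _ _ y]) (auto simp: eq_neg_iff_add_eq_0 add.commute)
  ultimately have "x = 0" using sc unfolding strongly_convex_def by blast
  then show ?thesis using g by (simp add: x_def vec_eq_iff)
qed

lemma sum_delta_scale:
  fixes t :: rat and f :: "rat ^ 'n \<Rightarrow> rat"
  assumes "finite B" "g \<in> B"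
  shows "(\<Sum>h\<in>B. (f h + (if h = g then t else 0)) *s h) = (\<Sum>h\<in>B. f h *s h) + t *s g"
proof -
  have "(\<Sum>h\<in>B. (f h + (if h = g then t else 0)) *s h)
      = (\<Sum>h\<in>B. f h *s h) + (\<Sum>h\<in>B. (if h = g then t *s h else 0))"
    by (simp add: sum.distrib[symmetric]) (intro sum.cong, auto simp: vec_eq_iff algebra_simps)
  then show ?thesis using assms by simp
qed



lemma exposing:
  fixes B :: "(rat ^ 'n::finite) set"
  assumes B: "finite B" and sc: "strongly_convex (qcone B)"
    and minB: "\<forall>r\<in>B. r \<notin> qcone (B - {r})" and r: "r \<in> B"
  shows "\<exists>m. (\<forall>h\<in>B. 0 \<le> qdot h m) \<and> qdot r m = 0 \<and> (\<forall>h\<in>B-{r}. 0 < qdot h m)"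
proof -
  have nz: "\<forall>h\<in>B. h \<noteq> 0" using minB zero_in_qcone by metis
  have one: "\<exists>m. (\<forall>h\<in>B. 0 \<le> qdot h m) \<and> qdot r m = 0 \<and> 0 < qdot g m"
    if g: "g \<in> B" "g \<noteq> r" for g
  proof -
    define I where "I = insert None (Some ` B)"
    define a where "a i = (case i of None \<Rightarrow> r | Some h \<Rightarrow> - h)" for i
    have "finite I" using B by (simp add: I_def)
    from farkas[OF this, of a g] show ?thesis
    proof
      assume "\<exists>x. (\<forall>i\<in>I. qdot (a i) x \<le> 0) \<and> 0 < qdot g x"
      then obtain x where x: "\<forall>i\<in>I. qdot (a i) x \<le> 0" "0 < qdot g x" by blast
      have h1: "\<forall>h\<in>B. 0 \<le> qdot h x" using x(1) by (auto simp: I_def a_def qdot_neg_left)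
      moreover have "qdot r x \<le> 0" using x(1) by (auto simp: I_def a_def)
      ultimately show ?thesis using x r by (intro exI[of _ x]) force
    next
      assume "\<exists>l. (\<forall>i\<in>I. 0 \<le> l i) \<and> g = (\<Sum>i\<in>I. l i *s a i)"
      then obtain l where l: "\<forall>i\<in>I. 0 \<le> l i" "g = (\<Sum>i\<in>I. l i *s a i)" by blast
      define lam where "lam h = l (Some h)" for h
      define c where "c = l None"
      have lam0: "\<forall>h\<in>B. 0 \<le> lam h" and c0: "0 \<le> c" using l(1) by (auto simp: I_def lam_def c_def)
      have "(\<Sum>i\<in>I. l i *s a i) = c *s r + (\<Sum>i\<in>Some ` B. l i *s a i)"
        using B by (simp add: I_def c_def a_def)
      also have "(\<Sum>i\<in>Some ` B. l i *s a i) = (\<Sum>h\<in>B. l (Some h) *s a (Some h))"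
        by (subst sum.reindex) (auto simp: inj_on_def)
      also have "\<dots> = - (\<Sum>h\<in>B. lam h *s h)"
        by (simp add: a_def lam_def sum_negf[symmetric] vec_eq_iff)
      finally have eq: "g + (\<Sum>h\<in>B. lam h *s h) = c *s r" using l(2) by simp
      have sB: "(\<Sum>h\<in>B. lam h *s h) = lam r *s r + (\<Sum>h\<in>B-{r}. lam h *s h)"
        using B r by (simp add: sum.remove)
      show ?thesis
      proof (cases "lam r < c")
        case True
        have gB: "g \<in> B - {r}" using g by auto
        have "(\<Sum>h\<in>B-{r}. (lam h + (if h = g then 1 else 0)) *s h) = (\<Sum>h\<in>B-{r}. lam h *s h) + g"
          using sum_delta_scale[of "B - {r}" g lam 1] B gB by simp
        also have "\<dots> = (c - lam r) *s r" using eq sB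
          by (simp add: vec_eq_iff algebra_simps)
        finally have e2: "(c - lam r) *s r = (\<Sum>h\<in>B-{r}. (lam h + (if h = g then 1 else 0)) *s h)" ..
        define \<mu> where "\<mu> h = (lam h + (if h = g then 1 else 0)) / (c - lam r)" for h
        have inv1: "inverse (c - lam r) * (c - lam r) = 1" using True by simp
        have "r = inverse (c - lam r) *s ((c - lam r) *s r)"
          by (simp only: vector_smult_assoc inv1 vector_smult_lid)
        also have "\<dots> = (\<Sum>h\<in>B-{r}. \<mu> h *s h)"
          unfolding e2 sum_cmul[symmetric] vector_smult_assoc by (simp add: \<mu>_def divide_inverse mult.commute)
        finally have "r \<in> qcone (B - {r})"
          using B True lam0 by (subst qcone_finite) (auto simp: \<mu>_def intro!: exI[of _ \<mu>])
        then show ?thesis using minB r by blast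
      next
        case False
        define \<nu> where "\<nu> h = (lam h + (if h = g then 1 else 0)) + (if h = r then - c else 0)" for h
        have "(\<Sum>h\<in>B. \<nu> h *s h) = (\<Sum>h\<in>B. (lam h + (if h = g then 1 else 0)) *s h) + (- c) *s r"
          unfolding \<nu>_def by (rule sum_delta_scale[OF B r])
        also have "\<dots> = (\<Sum>h\<in>B. lam h *s h) + g + (- c) *s r"
          using sum_delta_scale[OF B g(1), of lam 1] by simp
        also have "\<dots> = 0" using eq by (simp add: vec_eq_iff algebra_simps)
        finally have s0: "(\<Sum>h\<in>B. \<nu> h *s h) = 0" .
        have "\<forall>h\<in>B. 0 \<le> \<nu> h" using lam0 False g by (auto simp: \<nu>_def)
        moreover have "0 < \<nu> g" using lam0 g by (auto simp: \<nu>_def add_nonneg_pos)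
        ultimately have "g = 0" using pointed[OF B sc _ s0 g(1)] by blast
        then show ?thesis using nz g by blast
      qed
    qed
  qed
  then have "\<forall>g\<in>B-{r}. \<exists>m. (\<forall>h\<in>B. 0 \<le> qdot h m) \<and> qdot r m = 0 \<and> 0 < qdot g m" by blast
  then obtain M where M: "\<forall>g\<in>B-{r}. (\<forall>h\<in>B. 0 \<le> qdot h (M g)) \<and> qdot r (M g) = 0 \<and> 0 < qdot g (M g)"
    by metis
  define m where "m = (\<Sum>g\<in>B-{r}. M g)"
  have "\<forall>h\<in>B. 0 \<le> qdot h m" using M by (auto simp: m_def qdot_sum_right intro!: sum_nonneg)
  moreover have "qdot r m = 0" using M by (simp add: m_def qdot_sum_right)
  moreover have "0 < qdot h m" if h: "h \<in> B - {r}" for h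
  proof -
    have "0 < qdot h (M h)" using M h by blast
    also have "\<dots> \<le> (\<Sum>g\<in>B-{r}. qdot h (M g))"
      using M h B by (intro member_le_sum) auto
    finally show ?thesis by (simp add: m_def qdot_sum_right)
  qed
  ultimately show ?thesis by blast
qed



lemma prim_decomp:
  fixes \<rho> :: "int ^ 'n::finite"
  assumes "\<rho> \<noteq> 0"
  shows "\<exists>P d. primitive P \<and> 0 < d \<and> \<rho> = d *s P"
proof -
  define g where "g = Gcd (range (\<lambda>i. \<rho> $ i))"
  have g0: "g \<noteq> 0" using assms by (auto simp: g_def vec_eq_iff)
  have "0 \<le> g" unfolding g_def by simp
  then have gpos: "0 < g" using g0 by linarith
  have gd: "g dvd \<rho> $ i" for i unfolding g_def by (rule Gcd_dvd) auto
  define P where "P = (\<chi> i. \<rho> $ i div g)"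
  have rP: "\<rho> = g *s P" using gd by (simp add: P_def vec_eq_iff)
  have "primitive P"
    unfolding primitive_def
  proof (intro conjI allI impI)
    show "P \<noteq> 0" using rP assms by auto
  next
    fix m :: int and q assume "P = m *s q"
    then have "g * m dvd \<rho> $ i" for i using rP by (simp add: mult.assoc)
    then have "g * m dvd g" unfolding g_def by (intro Gcd_greatest) auto
    then have "m dvd 1" using g0 by (metis dvd_mult_cancel_left mult.right_neutral)
    then show "m = 1 \<or> m = -1" by auto
  qed
  then show ?thesis using gpos rP by blast
qed

lemma qcone_scale:
  assumes "finite A" "v \<in> qcone A" "0 \<le> t"
  shows "t *s v \<in> qcone A"
proof -
  obtain c where c: "\<forall>a\<in>A. 0 \<le> c a" "v = (\<Sum>a\<in>A. c a *s a)" using assms qcone_finite by blast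
  have "t *s v = (\<Sum>a\<in>A. (t * c a) *s a)" unfolding c(2) sum_cmul[symmetric] vector_smult_assoc ..
  then show ?thesis using assms c by (subst qcone_finite) (auto intro!: exI[of _ "\<lambda>a. t * c a"])
qed

lemma G1:
  fixes \<sigma> :: "(rat ^ 'n::finite) set"
  assumes cone: "rat_poly_cone \<sigma>" and sc: "strongly_convex \<sigma>" and v: "v \<in> \<sigma>"
  shows "\<exists>(F::(rat ^ 'n) set) c P. finite F \<and> (\<forall>a\<in>F. 0 \<le> c a \<and> P a \<in> prim_ray_gens \<sigma>) \<and> v = (\<Sum>a\<in>F. c a *s emb (P a))"
proof -
  obtain R where R: "finite R" "\<sigma> = qcone (emb ` R)" using cone unfolding rat_poly_cone_def by blast
  obtain B where B: "B \<subseteq> emb ` R" "qcone B = \<sigma>" "\<forall>r\<in>B. r \<notin> qcone (B - {r})"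
    using minimal_gen[of "emb ` R"] R by auto
  have fB: "finite B" using B(1) R(1) finite_subset by blast
  have scB: "strongly_convex (qcone B)" using sc B by simp
  have each: "\<exists>P d. P \<in> prim_ray_gens \<sigma> \<and> 0 < d \<and> h = d *s emb P" if h: "h \<in> B" for h
  proof -
    obtain \<rho> where \<rho>: "h = emb \<rho>" using h B(1) by auto
    have "h \<noteq> 0" using B(3) h zero_in_qcone by metis
    then have "\<rho> \<noteq> 0" using \<rho> by (auto simp: emb_def vec_eq_iff)
    then obtain P d where Pd: "primitive P" "0 < d" "\<rho> = d *s P" using prim_decomp by blast
    define d' :: rat where "d' = of_int d"
    have d'pos: "0 < d'" using Pd by (simp add: d'_def)
    have hP: "h = d' *s emb P" using \<rho> Pd by (simp add: emb_scale d'_def)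
    obtain m where m: "\<forall>h\<in>B. 0 \<le> qdot h m" "qdot h m = 0" "\<forall>h'\<in>B-{h}. 0 < qdot h' m"
      using exposing[OF fB scB B(3) h] by blast
    have "is_face \<sigma> (qcone {emb P})"
      unfolding is_face_def
    proof (intro exI[of _ m] conjI)
      show "\<forall>v\<in>\<sigma>. 0 \<le> qdot v m"
      proof
        fix v assume "v \<in> \<sigma>"
        then show "0 \<le> qdot v m" using qdot_qcone_nonneg[OF fB _ m(1)] B(2) by simp
      qed
      show "qcone {emb P} = {v \<in> \<sigma>. qdot v m = 0}"
      proof
        show "qcone {emb P} \<subseteq> {v \<in> \<sigma>. qdot v m = 0}"
        proof
          fix x assume "x \<in> qcone {emb P}"
          then obtain c where c: "0 \<le> c" "x = c *s emb P" by (auto simp: qcone_single)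
          have x: "x = (c / d') *s h" using d'pos by (simp add: hP c(2) vector_smult_assoc)
          have "x \<in> \<sigma>" unfolding x B(2)[symmetric]
            using c d'pos by (intro qcone_scale[OF fB] mem_qcone_gen[OF fB h]) auto
          moreover have "qdot x m = 0" using m(2) by (simp add: x qdot_scale_left)
          ultimately show "x \<in> {v \<in> \<sigma>. qdot v m = 0}" by blast
        qed
      next
        show "{v \<in> \<sigma>. qdot v m = 0} \<subseteq> qcone {emb P}"
        proof
          fix x assume "x \<in> {v \<in> \<sigma>. qdot v m = 0}"
          then have x: "x \<in> qcone B" "qdot x m = 0" using B(2) by auto
          obtain c where c: "\<forall>a\<in>B. 0 \<le> c a" "x = (\<Sum>a\<in>B. c a *s a)" using x(1) fB qcone_finite by blast
          have s0: "(\<Sum>a\<in>B. c a * qdot a m) = 0" using x(2) c(2) by (simp add: qdot_sum_left qdot_scale_left)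
          have nn: "\<And>a. a \<in> B \<Longrightarrow> 0 \<le> c a * qdot a m" using c(1) m(1) by simp
          have z: "\<forall>a\<in>B. c a * qdot a m = 0"
            using sum_nonneg_eq_0_iff[where f="\<lambda>a. c a * qdot a m", OF fB nn] s0 by simp
          have "\<forall>a\<in>B. a \<noteq> h \<longrightarrow> c a = 0"
          proof (intro ballI impI)
            fix a assume a: "a \<in> B" "a \<noteq> h"
            then have "0 < qdot a m" using m(3) by blast
            moreover have "c a * qdot a m = 0" using z a by blast
            ultimately show "c a = 0" by simp
          qed
          then have "x = (\<Sum>a\<in>B. (if a = h then c h else 0) *s a)"
            unfolding c(2) by (intro sum.cong) auto
          also have "\<dots> = c h *s h" using sum_indicator_scale[OF fB h] .
          also have "\<dots> = (c h * d') *s emb P" by (simp add: hP vector_smult_assoc)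
          moreover have "0 \<le> c h * d'" using c(1) h d'pos by simp
          ultimately show "x \<in> qcone {emb P}" unfolding qcone_single by blast
        qed
      qed
    qed
    then have "P \<in> prim_ray_gens \<sigma>" using Pd(1) by (simp add: prim_ray_gens_def)
    then show ?thesis using hP d'pos by blast
  qed
  have "\<forall>h\<in>B. \<exists>Pd. fst Pd \<in> prim_ray_gens \<sigma> \<and> 0 < snd Pd \<and> h = snd Pd *s emb (fst Pd)"
    using each by fastforce
  then obtain f where f: "\<forall>h\<in>B. fst (f h) \<in> prim_ray_gens \<sigma> \<and> 0 < snd (f h) \<and> h = snd (f h) *s emb (fst (f h))"
    by (rule bchoice_iff[THEN iffD1, elim_format]) blast
  define PP where "PP h = fst (f h)" for h
  define D where "D h = snd (f h)" for h
  have PD: "\<forall>h\<in>B. PP h \<in> prim_ray_gens \<sigma> \<and> 0 < D h \<and> h = D h *s emb (PP h)"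
    using f unfolding PP_def D_def by blast
  obtain c where c: "\<forall>a\<in>B. 0 \<le> c a" "v = (\<Sum>a\<in>B. c a *s a)"
    using v B(2) qcone_finite[OF fB] by auto
  have "v = (\<Sum>a\<in>B. (c a * D a) *s emb (PP a))"
    unfolding c(2)
  proof (intro sum.cong refl)
    fix a assume "a \<in> B"
    then have "a = D a *s emb (PP a)" using PD by blast
    then have "c a *s a = c a *s (D a *s emb (PP a))" by (rule arg_cong)
    then show "c a *s a = (c a * D a) *s emb (PP a)" by (simp only: vector_smult_assoc)
  qed
  moreover have "\<forall>a\<in>B. 0 \<le> c a * D a \<and> PP a \<in> prim_ray_gens \<sigma>"
    by (meson PD c(1) less_imp_le mult_nonneg_nonneg)
  ultimately show ?thesis using fB
    by (intro exI[of _ B] exI[of _ "\<lambda>a. c a * D a"] exI[of _ PP]) blast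
qed



lemma face_sub: "is_face \<sigma> \<gamma> \<Longrightarrow> \<gamma> \<subseteq> \<sigma>"
  unfolding is_face_def by blast

lemma prg_in: "p \<in> prim_ray_gens \<sigma> \<Longrightarrow> emb p \<in> \<sigma>"
proof -
  assume "p \<in> prim_ray_gens \<sigma>"
  then have "is_face \<sigma> (qcone {emb p})" unfolding prim_ray_gens_def by simp
  then have "qcone {emb p} \<subseteq> \<sigma>" by (rule face_sub)
  moreover have "emb p \<in> qcone {emb p}" unfolding qcone_single by (intro CollectI exI[of _ 1]) simp
  ultimately show ?thesis by blast
qed

lemma Ssg_pair_nonneg:
  assumes "u \<in> Ssg \<sigma>" "p \<in> prim_ray_gens \<sigma>" shows "0 \<le> ipair p u"
proof -
  have "emb p \<in> \<sigma>" using assms(2) by (rule prg_in)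
  then have "0 \<le> qdot (emb p) (emb u)" using assms(1) unfolding Ssg_def by blast
  then show ?thesis by (simp add: qdot_emb)
qed

lemma N1:
  fixes \<sigma> :: "(rat ^ 'n::finite) set"
  assumes cone: "rat_poly_cone \<sigma>" and sc: "strongly_convex \<sigma>"
    and w: "\<forall>g\<in>prim_ray_gens \<sigma>. 0 \<le> ipair g w"
  shows "w \<in> Ssg \<sigma>"
  unfolding Ssg_def
proof (intro CollectI ballI)
  fix v assume "v \<in> \<sigma>"
  then obtain F :: "(rat ^ 'n) set" and c P where F: "finite F" "\<forall>a\<in>F. 0 \<le> c a \<and> P a \<in> prim_ray_gens \<sigma>"
    "v = (\<Sum>a\<in>F. c a *s emb (P a))"
    using G1[OF cone sc \<open>v \<in> \<sigma>\<close>] by (elim exE conjE) (rule that, assumption+)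
  have "qdot v (emb w) = (\<Sum>a\<in>F. c a * of_int (ipair (P a) w))"
    by (simp add: F(3) qdot_sum_left qdot_scale_left qdot_emb)
  also have "\<dots> \<ge> 0" using F(2) w by (intro sum_nonneg) simp
  finally show "0 \<le> qdot v (emb w)" .
qed

lemma G_face:
  fixes \<sigma> :: "(rat ^ 'n::finite) set"
  assumes cone: "rat_poly_cone \<sigma>" and sc: "strongly_convex \<sigma>"
    and face: "is_face \<sigma> \<gamma>" and v: "v \<in> \<gamma>"
  shows "\<exists>(F::(rat ^ 'n) set) c P. finite F \<and> (\<forall>a\<in>F. 0 \<le> c a \<and> P a \<in> prim_ray_gens \<sigma> \<and> emb (P a) \<in> \<gamma>)
           \<and> v = (\<Sum>a\<in>F. c a *s emb (P a))"
proof -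
  obtain m where m: "\<forall>v\<in>\<sigma>. 0 \<le> qdot v m" "\<gamma> = {v\<in>\<sigma>. qdot v m = 0}"
    using face unfolding is_face_def by blast
  have vs: "v \<in> \<sigma>" "qdot v m = 0" using v m by auto
  obtain F :: "(rat ^ 'n) set" and c P where F: "finite F" "\<forall>a\<in>F. 0 \<le> c a \<and> P a \<in> prim_ray_gens \<sigma>"
    "v = (\<Sum>a\<in>F. c a *s emb (P a))"
    using G1[OF cone sc vs(1)] by (elim exE conjE) (rule that, assumption+)
  define F' where "F' = {a\<in>F. c a \<noteq> 0}"
  have fF': "finite F'" using F(1) by (simp add: F'_def)
  have vF': "v = (\<Sum>a\<in>F'. c a *s emb (P a))"
    unfolding F(3) F'_def using F(1) by (intro sum.mono_neutral_right) (auto simp: vec_eq_iff)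
  have s0: "(\<Sum>a\<in>F'. c a * qdot (emb (P a)) m) = 0"
    using vs(2) by (simp add: vF' qdot_sum_left qdot_scale_left)
  have nn: "0 \<le> c a * qdot (emb (P a)) m" if a: "a \<in> F'" for a
  proof -
    have "a \<in> F" using a by (simp add: F'_def)
    then have "0 \<le> c a" "emb (P a) \<in> \<sigma>" using F(2) prg_in by auto
    then show ?thesis using m(1) by simp
  qed
  have z: "\<forall>a\<in>F'. c a * qdot (emb (P a)) m = 0"
    using sum_nonneg_eq_0_iff[where f="\<lambda>a. c a * qdot (emb (P a)) m", OF fF' nn] s0 by simp
  have "\<forall>a\<in>F'. emb (P a) \<in> \<gamma>"
  proof
    fix a assume a: "a \<in> F'"
    then have "qdot (emb (P a)) m = 0" using z by (simp add: F'_def)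
    moreover have "emb (P a) \<in> \<sigma>" using a F(2) prg_in unfolding F'_def by blast
    ultimately show "emb (P a) \<in> \<gamma>" using m(2) by blast
  qed
  then have "finite F' \<and> (\<forall>a\<in>F'. 0 \<le> c a \<and> P a \<in> prim_ray_gens \<sigma> \<and> emb (P a) \<in> \<gamma>)
           \<and> v = (\<Sum>a\<in>F'. c a *s emb (P a))" using fF' vF' F(2) by (simp add: F'_def)
  then show ?thesis by (intro exI[of _ F'] exI[of _ c] exI[of _ P])
qed

lemma N2:
  fixes \<sigma> :: "(rat ^ 'n::finite) set"
  assumes cone: "rat_poly_cone \<sigma>" and sc: "strongly_convex \<sigma>"
    and face: "is_face \<sigma> \<gamma>" and v: "v \<in> \<gamma>"
    and dr: "demazure_root \<sigma> p e" and pg: "emb p \<notin> \<gamma>"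
  shows "0 \<le> qdot v (emb e)"
proof -
  obtain F :: "(rat ^ 'n) set" and c P where F: "finite F"
    "\<forall>a\<in>F. 0 \<le> c a \<and> P a \<in> prim_ray_gens \<sigma> \<and> emb (P a) \<in> \<gamma>"
    "v = (\<Sum>a\<in>F. c a *s emb (P a))"
    using G_face[OF cone sc face v] by (elim exE conjE) (rule that, assumption+)
  have "qdot v (emb e) = (\<Sum>a\<in>F. c a * of_int (ipair (P a) e))"
    by (simp add: F(3) qdot_sum_left qdot_scale_left qdot_emb)
  also have "\<dots> \<ge> 0"
  proof (intro sum_nonneg)
    fix a assume a: "a \<in> F"
    then have "P a \<noteq> p" using F(2) pg by auto
    then have "0 \<le> ipair (P a) e" using dr F(2) a unfolding demazure_root_def by auto
    then show "0 \<le> c a * of_int (ipair (P a) e)" using F(2) a by simp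
  qed
  finally show ?thesis .
qed

lemma ray_of_face:
  assumes face: "is_face \<sigma> \<tau>" and P: "P \<in> prim_ray_gens \<sigma>" and Pt: "emb P \<in> \<tau>"
  shows "P \<in> prim_ray_gens \<tau>"
proof -
  obtain mt where mt: "\<forall>v\<in>\<sigma>. 0 \<le> qdot v mt" "\<tau> = {v\<in>\<sigma>. qdot v mt = 0}"
    using face unfolding is_face_def by blast
  obtain mP where mP: "\<forall>v\<in>\<sigma>. 0 \<le> qdot v mP" "qcone {emb P} = {v\<in>\<sigma>. qdot v mP = 0}"
    using P unfolding prim_ray_gens_def is_face_def by blast
  have "qcone {emb P} = {v\<in>\<tau>. qdot v mP = 0}"
  proof
    show "qcone {emb P} \<subseteq> {v\<in>\<tau>. qdot v mP = 0}"
    proof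
      fix x assume x: "x \<in> qcone {emb P}"
      then obtain c where c: "x = c *s emb P" by (auto simp: qcone_single)
      have "qdot x mt = 0" using Pt mt(2) by (simp add: c qdot_scale_left)
      then show "x \<in> {v\<in>\<tau>. qdot v mP = 0}" using x mP(2) mt(2) by blast
    qed
    show "{v\<in>\<tau>. qdot v mP = 0} \<subseteq> qcone {emb P}" using mP(2) mt(2) by blast
  qed
  moreover have "\<forall>v\<in>\<tau>. 0 \<le> qdot v mP" using mP(1) mt(2) by blast
  ultimately have "is_face \<tau> (qcone {emb P})" unfolding is_face_def by blast
  then show ?thesis using P by (simp add: prim_ray_gens_def)
qed

lemma N3:
  fixes \<sigma> :: "(rat ^ 'n::finite) set"
  assumes cone: "rat_poly_cone \<sigma>" and sc: "strongly_convex \<sigma>"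
    and face: "is_face \<sigma> \<tau>" and rays: "prim_ray_gens \<tau> = p ` {..<k}"
    and w: "\<forall>s<k. ipair (p s) w = 0" and v: "v \<in> \<tau>"
  shows "qdot v (emb w) = 0"
proof -
  obtain F :: "(rat ^ 'n) set" and c P where F: "finite F"
    "\<forall>a\<in>F. 0 \<le> c a \<and> P a \<in> prim_ray_gens \<sigma> \<and> emb (P a) \<in> \<tau>"
    "v = (\<Sum>a\<in>F. c a *s emb (P a))"
    using G_face[OF cone sc face v] by (elim exE conjE) (rule that, assumption+)
  have "qdot v (emb w) = (\<Sum>a\<in>F. c a * of_int (ipair (P a) w))"
    by (simp add: F(3) qdot_sum_left qdot_scale_left qdot_emb)
  also have "\<dots> = 0"
  proof (intro sum.neutral ballI)
    fix a assume a: "a \<in> F"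
    then have "P a \<in> prim_ray_gens \<tau>" using ray_of_face[OF face] F(2) by blast
    then obtain s where "s < k" "P a = p s" using rays by auto
    then show "c a * of_int (ipair (P a) w) = 0" using w by simp
  qed
  finally show ?thesis .
qed

lemma perp_qcone:
  assumes "\<forall>v\<in>A. qdot v (emb w) = 0"
  shows "w \<in> perp (qcone A)"
  unfolding perp_def
proof (intro CollectI ballI)
  fix v assume "v \<in> qcone A"
  then obtain F c where F: "finite F" "F \<subseteq> A" "v = (\<Sum>a\<in>F. c a *s a)" unfolding qcone_def by blast
  show "qdot v (emb w) = 0" using assms F by (simp add: qdot_sum_left qdot_scale_left subset_iff)
qed

lemma sub_qcone: "A \<subseteq> qcone A"
proof
  fix a assume "a \<in> A"
  then show "a \<in> qcone A" unfolding qcone_def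
    by (intro CollectI exI[of _ "{a}"] exI[of _ "\<lambda>_. 1"]) auto
qed

lemma perp_add: "u \<in> perp \<gamma> \<Longrightarrow> w \<in> perp \<gamma> \<Longrightarrow> u + w \<in> perp \<gamma>"
  by (simp add: perp_def emb_add qdot_add_right)
lemma perp_scale: "u \<in> perp \<gamma> \<Longrightarrow> c *s u \<in> perp \<gamma>"
  by (simp add: perp_def emb_scale qdot_scale_right)
lemma perp_zero: "0 \<in> perp \<gamma>"
  by (simp add: perp_def emb_def qdot_def)
lemma perp_sum: "(\<And>s. s \<in> S \<Longrightarrow> f s \<in> perp \<gamma>) \<Longrightarrow> (\<Sum>s\<in>S. f s) \<in> perp \<gamma>"
  by (induction S rule: infinite_finite_induct) (auto simp: perp_zero perp_add)

lemma int_of_rat_vec: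
  fixes m :: "rat ^ 'n::finite"
  shows "\<exists>D u. 0 < D \<and> emb u = of_int D *s m"
proof -
  define den where "den i = snd (quotient_of (m $ i))" for i
  define num where "num i = fst (quotient_of (m $ i))" for i
  have dp: "0 < den i" for i by (simp add: den_def quotient_of_denom_pos')
  have md: "m $ i = of_int (num i) / of_int (den i)" for i
    by (rule quotient_of_div) (simp add: num_def den_def)
  define D where "D = (\<Prod>i\<in>UNIV. den i)"
  define u where "u = (\<chi> i. (\<Prod>j\<in>UNIV-{i}. den j) * num i)"
  have "0 < D" using dp by (simp add: D_def prod_pos)
  moreover have "emb u = of_int D *s m"
  proof -
    have "of_int ((\<Prod>j\<in>UNIV-{i}. den j) * num i) = (of_int D * m $ i :: rat)" for i
    proof -
      have "D = den i * (\<Prod>j\<in>UNIV-{i}. den j)" unfolding D_def by (simp add: prod.remove)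
      then show ?thesis using dp[of i] by (simp add: md)
    qed
    then show ?thesis by (simp add: emb_def u_def vec_eq_iff)
  qed
  ultimately show ?thesis by blast
qed

lemma face_u0:
  fixes \<sigma> :: "(rat ^ 'n::finite) set"
  assumes face: "is_face \<sigma> \<gamma>" and q: "emb q \<in> \<sigma>" "emb q \<notin> \<gamma>"
  shows "\<exists>u. u \<in> Ssg \<sigma> \<and> u \<in> perp \<gamma> \<and> 0 < ipair q u"
proof -
  obtain m where m: "\<forall>v\<in>\<sigma>. 0 \<le> qdot v m" "\<gamma> = {v\<in>\<sigma>. qdot v m = 0}"
    using face unfolding is_face_def by blast
  obtain D u where Du: "0 < D" "emb u = of_int D *s m" using int_of_rat_vec by blast
  have "u \<in> Ssg \<sigma>" using m(1) Du by (simp add: Ssg_def qdot_scale_right)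
  moreover have "u \<in> perp \<gamma>" using m(2) Du by (simp add: perp_def qdot_scale_right)
  moreover have "0 < qdot (emb q) m" using q m by (metis (mono_tags, lifting) mem_Collect_eq order_less_le)
  then have "0 < of_int D * qdot (emb q) m" using Du by simp
  then have "(0::rat) < of_int (ipair q u)" using Du qdot_emb[of q u] by (simp add: qdot_scale_right)
  then have "0 < ipair q u" by simp
  ultimately show ?thesis by blast
qed



locale RM =
  fixes \<sigma> \<tau> \<gamma> :: "(rat ^ 'n::finite) set"
    and p e1 e2 :: "nat \<Rightarrow> int ^ 'n"
    and k :: nat
  assumes cone: "rat_poly_cone \<sigma>" and sc: "strongly_convex \<sigma>"
    and tau_face: "is_face \<sigma> \<tau>"
    and tau_rays: "prim_ray_gens \<tau> = p ` {..<k}"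
    and roots: "\<forall>r<k. demazure_root \<sigma> (p r) (e1 r) \<and> demazure_root \<sigma> (p r) (e2 r)"
    and compat: "\<forall>r<k. \<forall>s<k. ipair (p s) (e1 r) = (if r = s then -1 else 0)
                             \<and> ipair (p s) (e2 r) = (if r = s then -1 else 0)"
    and gamma_face: "is_face \<sigma> \<gamma>"
begin

lemma dr1: "r < k \<Longrightarrow> demazure_root \<sigma> (p r) (e1 r)" using roots by blast
lemma dr2: "r < k \<Longrightarrow> demazure_root \<sigma> (p r) (e2 r)" using roots by blast
lemma p_prg: "r < k \<Longrightarrow> p r \<in> prim_ray_gens \<sigma>" using dr1 unfolding demazure_root_def by blast
lemma p_sigma: "r < k \<Longrightarrow> emb (p r) \<in> \<sigma>" using p_prg prg_in by blast
lemma p_tau: "r < k \<Longrightarrow> emb (p r) \<in> \<tau>"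
proof -
  assume "r < k"
  then have "p r \<in> prim_ray_gens \<tau>" using tau_rays by blast
  then show ?thesis by (rule prg_in)
qed
lemma gamma_sub: "\<gamma> \<subseteq> \<sigma>" using gamma_face face_sub by blast

lemma ipair_sum_e2: "t < k \<Longrightarrow> ipair (p t) (\<Sum>r<k. int (\<alpha> r) *s e2 r) = - int (\<alpha> t)"
proof -
  assume t: "t < k"
  have "ipair (p t) (\<Sum>r<k. int (\<alpha> r) *s e2 r) = (\<Sum>r<k. int (\<alpha> r) * (if r = t then -1 else 0))"
    unfolding ipair_sum_right ipair_scale_right using compat t by (intro sum.cong) auto
  also have "\<dots> = - int (\<alpha> t)" using t by (simp add: if_distrib[of "(*) _"] sum.delta cong: if_cong)
  finally show ?thesis .
qed

lemma ipair_sum_e1: "t < k \<Longrightarrow> ipair (p t) (\<Sum>r<k. int (\<alpha> r) *s e1 r) = - int (\<alpha> t)"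
proof -
  assume t: "t < k"
  have "ipair (p t) (\<Sum>r<k. int (\<alpha> r) *s e1 r) = (\<Sum>r<k. int (\<alpha> r) * (if r = t then -1 else 0))"
    unfolding ipair_sum_right ipair_scale_right using compat t by (intro sum.cong) auto
  also have "\<dots> = - int (\<alpha> t)" using t by (simp add: if_distrib[of "(*) _"] sum.delta cong: if_cong)
  finally show ?thesis .
qed

lemma ipair_sum_other:
  assumes g: "g \<in> prim_ray_gens \<sigma>" "g \<notin> p ` {..<k}"
    and f: "\<forall>r<k. demazure_root \<sigma> (p r) (f r)"
  shows "0 \<le> ipair g (\<Sum>r<k. int (\<alpha> r) *s f r)"
  unfolding ipair_sum_right ipair_scale_right
proof (intro sum_nonneg)
  fix r assume "r \<in> {..<k}"
  then have "0 \<le> ipair g (f r)" using f g unfolding demazure_root_def by auto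
  then show "0 \<le> int (\<alpha> r) * ipair g (f r)" by simp
qed

lemma ipair_u: "u \<in> Ssg \<sigma> \<Longrightarrow> t < k \<Longrightarrow> ipair (p t) u = int (nat (ipair (p t) u))"
proof -
  assume u: "u \<in> Ssg \<sigma>" and t: "t < k"
  have "0 \<le> ipair (p t) u" by (rule Ssg_pair_nonneg[OF u p_prg[OF t]])
  then show ?thesis by simp
qed

lemma Ssg_shift:
  assumes u: "u \<in> Ssg \<sigma>"
    and le: "\<forall>t<k. int (\<alpha> t) + int (\<beta> t) \<le> ipair (p t) u"
  shows "u + (\<Sum>r<k. int (\<alpha> r) *s e2 r) + (\<Sum>r<k. int (\<beta> r) *s e1 r) \<in> Ssg \<sigma>"
proof (rule N1[OF cone sc], intro ballI)
  fix g assume g: "g \<in> prim_ray_gens \<sigma>"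
  show "0 \<le> ipair g (u + (\<Sum>r<k. int (\<alpha> r) *s e2 r) + (\<Sum>r<k. int (\<beta> r) *s e1 r))"
  proof (cases "g \<in> p ` {..<k}")
    case True
    then obtain t where t: "t < k" "g = p t" by auto
    then show ?thesis using le[rule_format, OF t(1)] by (simp add: ipair_add_right ipair_sum_e1 ipair_sum_e2)
  next
    case False
    have "0 \<le> ipair g u" using Ssg_pair_nonneg[OF u g] .
    moreover have "0 \<le> ipair g (\<Sum>r<k. int (\<alpha> r) *s e2 r)"
      using ipair_sum_other[OF g False] dr2 by blast
    moreover have "0 \<le> ipair g (\<Sum>r<k. int (\<beta> r) *s e1 r)"
      using ipair_sum_other[OF g False] dr1 by blast
    ultimately show ?thesis by (simp add: ipair_add_right)
  qed
qed

lemma perp_split: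
  assumes u: "u \<in> Ssg \<sigma>"
    and c: "\<forall>r<k. 0 < c r \<longrightarrow> emb (p r) \<notin> \<gamma> \<and> demazure_root \<sigma> (p r) (f r)"
    and w: "u + (\<Sum>r<k. int (c r) *s f r) \<in> perp \<gamma>"
  shows "u \<in> perp \<gamma> \<and> (\<forall>r<k. 0 < c r \<longrightarrow> f r \<in> perp \<gamma>)"
proof -
  have main: "qdot v (emb u) = 0 \<and> (\<forall>r<k. 0 < c r \<longrightarrow> qdot v (emb (f r)) = 0)" if v: "v \<in> \<gamma>" for v
  proof -
    have nu: "0 \<le> qdot v (emb u)" using u v gamma_sub unfolding Ssg_def by blast
    have nn: "0 \<le> of_int (int (c r)) * qdot v (emb (f r))" if r: "r \<in> {..<k}" for r
    proof (cases "c r = 0")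
      case False
      then have "emb (p r) \<notin> \<gamma>" "demazure_root \<sigma> (p r) (f r)" using c r by auto
      then have "0 \<le> qdot v (emb (f r))" using N2[OF cone sc gamma_face v] by blast
      then show ?thesis by simp
    qed simp
    have "0 = qdot v (emb (u + (\<Sum>r<k. int (c r) *s f r)))" using w v unfolding perp_def by auto
    also have "\<dots> = qdot v (emb u) + (\<Sum>r<k. of_int (int (c r)) * qdot v (emb (f r)))"
      by (simp add: emb_add emb_sum emb_scale qdot_add_right qdot_sum_right qdot_scale_right)
    finally have s: "qdot v (emb u) + (\<Sum>r<k. of_int (int (c r)) * qdot v (emb (f r))) = 0" by simp
    have ns: "0 \<le> (\<Sum>r<k. of_int (int (c r)) * qdot v (emb (f r)))" using nn by (intro sum_nonneg) auto
    have u0: "qdot v (emb u) = 0" and s0: "(\<Sum>r<k. of_int (int (c r)) * qdot v (emb (f r))) = 0"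
      using s nu ns by linarith+
    have "\<forall>r\<in>{..<k}. of_int (int (c r)) * qdot v (emb (f r)) = 0"
      using sum_nonneg_eq_0_iff[where f="\<lambda>r. of_int (int (c r)) * qdot v (emb (f r))", OF finite_lessThan nn] s0 by blast
    then have "\<forall>r<k. c r = 0 \<or> qdot v (emb (f r)) = 0" by simp
    then show ?thesis using u0 by (metis less_irrefl)
  qed
  show ?thesis using main unfolding perp_def by blast
qed

abbreviation nn :: "int ^ 'n \<Rightarrow> nat \<Rightarrow> nat" where
  "nn u r \<equiv> nat (ipair (p r) u)"

lemma support:
  fixes x :: "int ^ 'n \<Rightarrow> 'k::field"
  assumes x: "x \<in> orbit \<sigma> \<gamma>" and u: "u \<in> Ssg \<sigma>"
    and i: "i \<in> PiE {..<k} (\<lambda>r. {..nn u r})"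
    and xa: "x (u + (\<Sum>r<k. int (i r) *s e2 r)) \<noteq> 0"
    and xb: "x (u + (\<Sum>r<k. int (nn u r - i r) *s e1 r)) \<noteq> 0"
  shows "(\<forall>t<k. emb (p t) \<in> \<gamma> \<longrightarrow> nn u t = 0 \<and> i t = 0) \<and> u \<in> perp \<gamma>
       \<and> (\<forall>t<k. emb (p t) \<notin> \<gamma> \<longrightarrow> (0 < i t \<longrightarrow> e2 t \<in> perp \<gamma>) \<and> (i t < nn u t \<longrightarrow> e1 t \<in> perp \<gamma>))"
proof -
  have inS: "w \<in> Ssg \<sigma> \<and> w \<in> perp \<gamma>" if "x w \<noteq> 0" for w
    using x that unfolding orbit_def Xpts_def by blast
  define a where "a = u + (\<Sum>r<k. int (i r) *s e2 r)"
  define b where "b = u + (\<Sum>r<k. int (nn u r - i r) *s e1 r)"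
  have a: "a \<in> Ssg \<sigma>" "a \<in> perp \<gamma>" using inS xa by (auto simp: a_def)
  have b: "b \<in> Ssg \<sigma>" "b \<in> perp \<gamma>" using inS xb by (auto simp: b_def)
  have ile: "t < k \<Longrightarrow> i t \<le> nn u t" for t using i by (auto simp: PiE_iff)
  have part1: "nn u t = 0 \<and> i t = 0" if t: "t < k" "emb (p t) \<in> \<gamma>" for t
  proof -
    have "qdot (emb (p t)) (emb a) = 0" "qdot (emb (p t)) (emb b) = 0"
      using a b t unfolding perp_def by auto
    then have "ipair (p t) a = 0" "ipair (p t) b = 0" by (simp_all add: qdot_emb)
    moreover have "ipair (p t) a = int (nn u t) - int (i t)"
      using ipair_u[OF u t(1)] t by (simp add: a_def ipair_add_right ipair_sum_e2)
    moreover have "ipair (p t) b = int (nn u t) - int (nn u t - i t)"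
      using ipair_u[OF u t(1)] t by (simp add: b_def ipair_add_right ipair_sum_e1)
    ultimately have A: "int (nn u t) - int (i t) = 0" and B: "int (nn u t) - int (nn u t - i t) = 0"
      by simp_all
    from A have A': "nn u t = i t" by linarith
    from B have "nn u t - i t = nn u t" by linarith
    with A' show ?thesis by simp
  qed
  have pa: "u \<in> perp \<gamma> \<and> (\<forall>r<k. 0 < i r \<longrightarrow> e2 r \<in> perp \<gamma>)"
  proof (rule perp_split[OF u])
    show "\<forall>r<k. 0 < i r \<longrightarrow> emb (p r) \<notin> \<gamma> \<and> demazure_root \<sigma> (p r) (e2 r)"
      using part1 dr2 by fastforce
    show "u + (\<Sum>r<k. int (i r) *s e2 r) \<in> perp \<gamma>" using a by (simp add: a_def)
  qed
  have pb: "u \<in> perp \<gamma> \<and> (\<forall>r<k. 0 < nn u r - i r \<longrightarrow> e1 r \<in> perp \<gamma>)"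
  proof (rule perp_split[OF u])
    show "\<forall>r<k. 0 < nn u r - i r \<longrightarrow> emb (p r) \<notin> \<gamma> \<and> demazure_root \<sigma> (p r) (e1 r)"
      using part1 dr1 by fastforce
    show "u + (\<Sum>r<k. int (nn u r - i r) *s e1 r) \<in> perp \<gamma>" using b by (simp add: b_def)
  qed
  show ?thesis using part1 pa pb by auto
qed

lemma rmul_u: "u \<in> Ssg \<sigma> \<Longrightarrow> rmul \<sigma> p e1 e2 k x y u =
      (\<Sum>i \<in> PiE {..<k} (\<lambda>r. {..nn u r}).
         (\<Prod>r<k. of_nat (nn u r choose i r))
         * x (u + (\<Sum>r<k. int (i r) *s e2 r))
         * y (u + (\<Sum>r<k. int (nn u r - i r) *s e1 r)))"
  by (simp add: rmul_def)

lemma rmul_zero_n: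
  fixes x y :: "int ^ 'n \<Rightarrow> 'k::field"
  assumes u: "u \<in> Ssg \<sigma>" and z: "\<forall>s<k. ipair (p s) u = 0"
  shows "rmul \<sigma> p e1 e2 k x y u = x u * y u"
proof -
  define f where "f = restrict (\<lambda>_. 0::nat) {..<k}"
  have "PiE {..<k} (\<lambda>r. {..nn u r}) = PiE {..<k} (\<lambda>r. {f r})"
    using z by (intro PiE_cong) (auto simp: f_def)
  also have "\<dots> = {f}" by (rule PiE_singleton) (unfold f_def, rule restrict_extensional)
  finally have P: "PiE {..<k} (\<lambda>r. {..nn u r}) = {f}" .
  have "(\<Sum>r<k. int (f r) *s e2 r) = 0" by (simp add: f_def)
  moreover have "(\<Sum>r<k. int (nn u r - f r) *s e1 r) = 0" using z by (simp add: f_def)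
  moreover have "(\<Prod>r<k. of_nat (nn u r choose f r)) = (1::'k)" by (simp add: f_def)
  ultimately show ?thesis using u by (simp add: rmul_u P)
qed

lemma idem_one:
  fixes x :: "int ^ 'n \<Rightarrow> 'k::field"
  assumes x: "x \<in> orbit \<sigma> \<gamma>" and idem: "rmul \<sigma> p e1 e2 k x x = x"
    and u: "u \<in> Ssg \<sigma>" "u \<in> perp \<gamma>" and z: "\<forall>s<k. ipair (p s) u = 0"
  shows "x u = 1"
proof -
  have "x u * x u = x u" using rmul_zero_n[OF u(1) z, of x x] idem by simp
  moreover have "x u \<noteq> 0" using x u unfolding orbit_def by blast
  ultimately show ?thesis by (metis mult_cancel_right2)
qed

lemma idem_notboth:
  fixes x :: "int ^ 'n \<Rightarrow> 'k::field"
  assumes x: "x \<in> orbit \<sigma> \<gamma>" and idem: "rmul \<sigma> p e1 e2 k x x = x"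
    and t: "t < k" "emb (p t) \<notin> \<gamma>"
  shows "e1 t \<in> perp \<gamma> \<or> e2 t \<in> perp \<gamma>"
proof -
  obtain u where u: "u \<in> Ssg \<sigma>" "u \<in> perp \<gamma>" "0 < ipair (p t) u"
    using face_u0[OF gamma_face p_sigma[OF t(1)] t(2)] by blast
  have "x u \<noteq> 0" using x u unfolding orbit_def by blast
  then have "rmul \<sigma> p e1 e2 k x x u \<noteq> 0" using idem by simp
  then obtain i where i: "i \<in> PiE {..<k} (\<lambda>r. {..nn u r})"
    and ne: "(\<Prod>r<k. of_nat (nn u r choose i r)) * x (u + (\<Sum>r<k. int (i r) *s e2 r))
         * x (u + (\<Sum>r<k. int (nn u r - i r) *s e1 r)) \<noteq> 0"
    unfolding rmul_u[OF u(1)] using sum.not_neutral_contains_not_neutral by blast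
  have xa: "x (u + (\<Sum>r<k. int (i r) *s e2 r)) \<noteq> 0" and xb: "x (u + (\<Sum>r<k. int (nn u r - i r) *s e1 r)) \<noteq> 0"
    using ne by auto
  have S: "(0 < i t \<longrightarrow> e2 t \<in> perp \<gamma>) \<and> (i t < nn u t \<longrightarrow> e1 t \<in> perp \<gamma>)"
    using support[OF x u(1) i xa xb] t by blast
  have "0 < nn u t" using u(3) by simp
  then show ?thesis using S by (cases "i t = 0") auto
qed

end



context RM begin

lemma zero_Ssg: "0 \<in> Ssg \<sigma>"
  by (simp add: Ssg_def emb_def qdot_def)

lemma Ssg_add: "u \<in> Ssg \<sigma> \<Longrightarrow> w \<in> Ssg \<sigma> \<Longrightarrow> u + w \<in> Ssg \<sigma>"
  by (simp add: Ssg_def emb_add qdot_add_right)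

lemma perp_add_iff:
  assumes "u \<in> Ssg \<sigma>" "w \<in> Ssg \<sigma>"
  shows "u + w \<in> perp \<gamma> \<longleftrightarrow> u \<in> perp \<gamma> \<and> w \<in> perp \<gamma>"
proof
  assume uw: "u + w \<in> perp \<gamma>"
  have "qdot v (emb u) = 0 \<and> qdot v (emb w) = 0" if v: "v \<in> \<gamma>" for v
  proof -
    have "0 \<le> qdot v (emb u)" "0 \<le> qdot v (emb w)" using assms v gamma_sub unfolding Ssg_def by blast+
    moreover have "qdot v (emb u) + qdot v (emb w) = 0"
      using uw v unfolding perp_def by (simp add: emb_add qdot_add_right)
    ultimately show ?thesis by linarith
  qed
  then show "u \<in> perp \<gamma> \<and> w \<in> perp \<gamma>" unfolding perp_def by blast
qed (simp add: perp_add)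

lemma xpt_orbit: "(xpt \<sigma> \<gamma> :: int ^ 'n \<Rightarrow> 'k::field) \<in> orbit \<sigma> \<gamma>"
  unfolding orbit_def Xpts_def xpt_def
  using zero_Ssg perp_zero Ssg_add perp_add_iff by auto

lemma p_perp_zero: "u \<in> perp \<gamma> \<Longrightarrow> s < k \<Longrightarrow> emb (p s) \<in> \<gamma> \<Longrightarrow> ipair (p s) u = 0"
  unfolding perp_def by (auto simp: qdot_emb)

lemma orbit_nz: "x \<in> orbit \<sigma> \<gamma> \<Longrightarrow> u \<in> Ssg \<sigma> \<Longrightarrow> x u \<noteq> 0 \<longleftrightarrow> u \<in> perp \<gamma>"
  unfolding orbit_def by blast

lemma orbit_out: "x \<in> orbit \<sigma> \<gamma> \<Longrightarrow> u \<notin> Ssg \<sigma> \<Longrightarrow> x u = 0"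
  unfolding orbit_def Xpts_def by blast

lemma orbit_mult: "x \<in> orbit \<sigma> \<gamma> \<Longrightarrow> u \<in> Ssg \<sigma> \<Longrightarrow> w \<in> Ssg \<sigma> \<Longrightarrow> x (u + w) = x u * x w"
  unfolding orbit_def Xpts_def by blast

lemma rmul_out: "u \<notin> Ssg \<sigma> \<Longrightarrow> rmul \<sigma> p e1 e2 k x y u = 0"
  by (simp add: rmul_def)

lemma rmul_vanish:
  fixes x :: "int ^ 'n \<Rightarrow> 'k::field"
  assumes x: "x \<in> orbit \<sigma> \<gamma>" and u: "u \<in> Ssg \<sigma>" "u \<notin> perp \<gamma>"
  shows "rmul \<sigma> p e1 e2 k x x u = 0"
  unfolding rmul_u[OF u(1)]
proof (intro sum.neutral ballI)
  fix i assume i: "i \<in> PiE {..<k} (\<lambda>r. {..nn u r})"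
  show "(\<Prod>r<k. of_nat (nn u r choose i r)) * x (u + (\<Sum>r<k. int (i r) *s e2 r))
         * x (u + (\<Sum>r<k. int (nn u r - i r) *s e1 r)) = 0"
  proof (rule ccontr)
    assume "\<not> ?thesis"
    then have "x (u + (\<Sum>r<k. int (i r) *s e2 r)) \<noteq> 0" "x (u + (\<Sum>r<k. int (nn u r - i r) *s e1 r)) \<noteq> 0"
      by auto
    then show False using support[OF x u(1) i] u(2) by blast
  qed
qed

lemma case1:
  assumes tg: "\<tau> \<subseteq> \<gamma>"
  shows "{x \<in> (orbit \<sigma> \<gamma> :: (int ^ 'n \<Rightarrow> 'k::field) set). rmul \<sigma> p e1 e2 k x x = x} = {xpt \<sigma> \<gamma>}"
proof -
  have z: "\<forall>s<k. ipair (p s) u = 0" if "u \<in> perp \<gamma>" for u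
    using p_perp_zero[OF that] p_tau tg by blast
  have "x = xpt \<sigma> \<gamma>" if x: "x \<in> orbit \<sigma> \<gamma>" "rmul \<sigma> p e1 e2 k x x = x" for x :: "int ^ 'n \<Rightarrow> 'k"
  proof
    fix u show "x u = xpt \<sigma> \<gamma> u"
    proof (cases "u \<in> Ssg \<sigma>")
      case False then show ?thesis using orbit_out[OF x(1)] by (simp add: xpt_def)
    next
      case True
      show ?thesis
      proof (cases "u \<in> perp \<gamma>")
        case True
        then show ?thesis using idem_one[OF x \<open>u \<in> Ssg \<sigma>\<close> True z[OF True]] \<open>u \<in> Ssg \<sigma>\<close> by (simp add: xpt_def)
      next
        case False then show ?thesis using orbit_nz[OF x(1) \<open>u \<in> Ssg \<sigma>\<close>] by (simp add: xpt_def)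
      qed
    qed
  qed
  moreover have "rmul \<sigma> p e1 e2 k (xpt \<sigma> \<gamma>) (xpt \<sigma> \<gamma>) = (xpt \<sigma> \<gamma> :: int ^ 'n \<Rightarrow> 'k)"
  proof
    fix u show "rmul \<sigma> p e1 e2 k (xpt \<sigma> \<gamma>) (xpt \<sigma> \<gamma>) u = (xpt \<sigma> \<gamma> u :: 'k)"
    proof (cases "u \<in> Ssg \<sigma>")
      case False then show ?thesis by (simp add: rmul_out xpt_def)
    next
      case True
      show ?thesis
      proof (cases "u \<in> perp \<gamma>")
        case True
        then show ?thesis using rmul_zero_n[OF \<open>u \<in> Ssg \<sigma>\<close> z[OF True], of "xpt \<sigma> \<gamma>" "xpt \<sigma> \<gamma>"] \<open>u \<in> Ssg \<sigma>\<close> by (simp add: xpt_def)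
      next
        case False
        then show ?thesis using rmul_vanish[OF xpt_orbit \<open>u \<in> Ssg \<sigma>\<close>] by (simp add: xpt_def)
      qed
    qed
  qed
  ultimately show ?thesis using xpt_orbit by blast
qed

end



context RM begin

lemma Ssg_add_root:
  assumes w: "w \<in> Ssg \<sigma>" and r: "r < k" and f: "demazure_root \<sigma> (p r) f"
    and nn0: "\<forall>t<k. 0 \<le> ipair (p t) (w + f)"
  shows "w + f \<in> Ssg \<sigma>"
proof (rule N1[OF cone sc], intro ballI)
  fix g assume g: "g \<in> prim_ray_gens \<sigma>"
  show "0 \<le> ipair g (w + f)"
  proof (cases "g \<in> p ` {..<k}")
    case True then show ?thesis using nn0 by auto
  next
    case False
    then have "g \<noteq> p r" using r by auto
    then have "0 \<le> ipair g f" using f g unfolding demazure_root_def by auto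
    moreover have "0 \<le> ipair g w" using Ssg_pair_nonneg[OF w g] .
    ultimately show ?thesis by (simp add: ipair_add_right)
  qed
qed

lemma PiE_01:
  assumes r: "r < k"
  shows "PiE {..<k} (\<lambda>t. {..(if t = r then 1 else 0::nat)})
       = {restrict (\<lambda>_. 0) {..<k}, (restrict (\<lambda>_. 0) {..<k})(r := 1)}"
proof
  show "PiE {..<k} (\<lambda>t. {..(if t = r then 1 else 0::nat)})
       \<subseteq> {restrict (\<lambda>_. 0) {..<k}, (restrict (\<lambda>_. 0) {..<k})(r := 1)}"
  proof
    fix g assume g: "g \<in> PiE {..<k} (\<lambda>t. {..(if t = r then 1 else 0::nat)})"
    have g1: "g t = 0" if "t < k" "t \<noteq> r" for t
    proof -
      have "g t \<in> {..(if t = r then 1 else 0::nat)}" using PiE_mem[OF g, of t] that by simp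
      then show ?thesis using that by simp
    qed
    have g2: "g r \<le> 1"
    proof -
      have "g r \<in> {..(if r = r then 1 else 0::nat)}" using PiE_mem[OF g, of r] r by simp
      then show ?thesis by simp
    qed
    have g3: "g t = undefined" if "\<not> t < k" for t
      using g that by (auto simp: PiE_iff extensional_def)
    show "g \<in> {restrict (\<lambda>_. 0) {..<k}, (restrict (\<lambda>_. 0) {..<k})(r := 1)}"
    proof (cases "g r = 0")
      case True
      then have "g = restrict (\<lambda>_. 0) {..<k}" using g1 g3 by (auto simp: fun_eq_iff)
      then show ?thesis by blast
    next
      case False
      then have "g r = 1" using g2 by simp
      then have "g = (restrict (\<lambda>_. 0) {..<k})(r := 1)" using g1 g3 r by (auto simp: fun_eq_iff)
      then show ?thesis by blast
    qed
  qed
  show "{restrict (\<lambda>_. 0) {..<k}, (restrict (\<lambda>_. 0) {..<k})(r := 1)}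
       \<subseteq> PiE {..<k} (\<lambda>t. {..(if t = r then 1 else 0::nat)})"
    using r by (auto simp: PiE_iff extensional_def)
qed

lemma sum_delta_e:
  assumes r: "r < k"
  shows "(\<Sum>t<k. int (if t = r then 1 else 0) *s (f t :: int ^ 'n)) = f r"
proof -
  have "(\<Sum>t<k. int (if t = r then 1 else 0) *s f t) = (\<Sum>t<k. if t = r then f t else 0)"
    by (intro sum.cong) (auto simp: vec_eq_iff)
  then show ?thesis using r by simp
qed

lemma case2:
  assumes r: "r < k" "emb (p r) \<notin> \<gamma>"
    and both: "(e1 r \<notin> perp \<gamma> \<and> e2 r \<notin> perp \<gamma>) \<or> (e1 r \<in> perp \<gamma> \<and> e2 r \<in> perp \<gamma>)"
  shows "{x \<in> (orbit \<sigma> \<gamma> :: (int ^ 'n \<Rightarrow> 'k::field) set). rmul \<sigma> p e1 e2 k x x = x} = {}"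
proof -
  have False if x: "x \<in> orbit \<sigma> \<gamma>" and idem: "rmul \<sigma> p e1 e2 k x x = x" for x :: "int ^ 'n \<Rightarrow> 'k"
  proof (cases "e1 r \<notin> perp \<gamma> \<and> e2 r \<notin> perp \<gamma>")
    case True
    then show False using idem_notboth[OF x idem r] by blast
  next
    case False
    then have ein: "e1 r \<in> perp \<gamma>" "e2 r \<in> perp \<gamma>" using both by auto
    obtain u0 where u0: "u0 \<in> Ssg \<sigma>" "u0 \<in> perp \<gamma>" "0 < ipair (p r) u0"
      using face_u0[OF gamma_face p_sigma[OF r(1)] r(2)] by blast
    define \<alpha> where "\<alpha> s = (if emb (p s) \<notin> \<gamma> \<and> e1 s \<notin> perp \<gamma> then nn u0 s else 0)" for s
    define \<beta> where "\<beta> s = (if emb (p s) \<notin> \<gamma> \<and> e1 s \<in> perp \<gamma> then (if s = r then nn u0 s - 1 else nn u0 s) else 0)" for s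
    define us where "us = u0 + (\<Sum>s<k. int (\<alpha> s) *s e2 s) + (\<Sum>s<k. int (\<beta> s) *s e1 s)"
    have n0: "1 \<le> nn u0 r" using u0(3) by simp
    have ipu0: "t < k \<Longrightarrow> ipair (p t) u0 = int (nn u0 t)" for t using ipair_u[OF u0(1)] by blast
    have ab: "int (\<alpha> t) + int (\<beta> t) = ipair (p t) u0 - (if t = r then 1 else 0)" if t: "t < k" for t
    proof (cases "emb (p t) \<in> \<gamma>")
      case True
      then have "t \<noteq> r" using r by auto
      then show ?thesis using True p_perp_zero[OF u0(2) t True] by (simp add: \<alpha>_def \<beta>_def)
    next
      case False
      show ?thesis
      proof (cases "e1 t \<in> perp \<gamma>")
        case True
        then show ?thesis using False ipu0[OF t] n0 by (auto simp: \<alpha>_def \<beta>_def of_nat_diff)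
      next
        case False
        then have "t \<noteq> r" using ein by auto
        then show ?thesis using False \<open>emb (p t) \<notin> \<gamma>\<close> ipu0[OF t] by (simp add: \<alpha>_def \<beta>_def)
      qed
    qed
    have ip: "ipair (p t) us = (if t = r then 1 else 0)" if t: "t < k" for t
      using ab[OF t] t by (simp add: us_def ipair_add_right ipair_sum_e1 ipair_sum_e2)
    have usS: "us \<in> Ssg \<sigma>" unfolding us_def
      by (rule Ssg_shift[OF u0(1)]) (use ab in auto)
    have usP: "us \<in> perp \<gamma>"
    proof -
      have "(\<Sum>s<k. int (\<alpha> s) *s e2 s) \<in> perp \<gamma>"
      proof (rule perp_sum)
        fix s assume s: "s \<in> {..<k}"
        show "int (\<alpha> s) *s e2 s \<in> perp \<gamma>"
        proof (cases "emb (p s) \<notin> \<gamma> \<and> e1 s \<notin> perp \<gamma>")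
          case True
          then have "e2 s \<in> perp \<gamma>" using idem_notboth[OF x idem] s by blast
          then show ?thesis by (rule perp_scale)
        next
          case False
          then have "\<alpha> s = 0" unfolding \<alpha>_def by auto
          then show ?thesis by (simp add: perp_zero)
        qed
      qed
      moreover have "(\<Sum>s<k. int (\<beta> s) *s e1 s) \<in> perp \<gamma>"
      proof (rule perp_sum)
        fix s assume s: "s \<in> {..<k}"
        show "int (\<beta> s) *s e1 s \<in> perp \<gamma>"
        proof (cases "emb (p s) \<notin> \<gamma> \<and> e1 s \<in> perp \<gamma>")
          case True
          then show ?thesis by (simp add: perp_scale)
        next
          case False
          then have "\<beta> s = 0" unfolding \<beta>_def by auto
          then show ?thesis by (simp add: perp_zero)
        qed
      qed
      ultimately show ?thesis using u0(2) by (simp add: us_def perp_add)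
    qed
    have nus: "nn us t = (if t = r then 1 else 0)" if "t < k" for t using ip[OF that] by simp
    define i0 where "i0 = restrict (\<lambda>_. 0::nat) {..<k}"
    define i1 where "i1 = i0(r := 1)"
    have i01: "i0 \<noteq> i1" using r(1) by (auto simp: i0_def i1_def fun_eq_iff)
    have PP: "PiE {..<k} (\<lambda>t. {..nn us t}) = {i0, i1}"
      unfolding i0_def i1_def PiE_01[OF r(1), symmetric] by (intro PiE_cong) (simp add: nus)
    have w1: "x (us + e1 r) = 1"
    proof (rule idem_one[OF x idem])
      have z: "\<forall>t<k. ipair (p t) (us + e1 r) = 0" using ip compat r(1) by (simp add: ipair_add_right)
      then show "\<forall>s<k. ipair (p s) (us + e1 r) = 0" .
      show "us + e1 r \<in> Ssg \<sigma>" using Ssg_add_root[OF usS r(1) dr1[OF r(1)]] z by simp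
      show "us + e1 r \<in> perp \<gamma>" using usP ein by (simp add: perp_add)
    qed
    have w2: "x (us + e2 r) = 1"
    proof (rule idem_one[OF x idem])
      have z: "\<forall>t<k. ipair (p t) (us + e2 r) = 0" using ip compat r(1) by (simp add: ipair_add_right)
      then show "\<forall>s<k. ipair (p s) (us + e2 r) = 0" .
      show "us + e2 r \<in> Ssg \<sigma>" using Ssg_add_root[OF usS r(1) dr2[OF r(1)]] z by simp
      show "us + e2 r \<in> perp \<gamma>" using usP ein by (simp add: perp_add)
    qed
    have T0: "(\<Prod>t<k. of_nat (nn us t choose i0 t)) * x (us + (\<Sum>t<k. int (i0 t) *s e2 t))
         * x (us + (\<Sum>t<k. int (nn us t - i0 t) *s e1 t)) = x us"
    proof -
      have "(\<Prod>t<k. of_nat (nn us t choose i0 t)) = (1::'k)" by (simp add: i0_def)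
      moreover have "(\<Sum>t<k. int (i0 t) *s e2 t) = 0" by (simp add: i0_def)
      moreover have "(\<Sum>t<k. int (nn us t - i0 t) *s e1 t) = (\<Sum>t<k. int (if t = r then 1 else 0) *s e1 t)"
        by (intro sum.cong) (auto simp: i0_def nus)
      ultimately show ?thesis using w1 sum_delta_e[OF r(1), of e1] by simp
    qed
    have T1: "(\<Prod>t<k. of_nat (nn us t choose i1 t)) * x (us + (\<Sum>t<k. int (i1 t) *s e2 t))
         * x (us + (\<Sum>t<k. int (nn us t - i1 t) *s e1 t)) = x us"
    proof -
      have "(\<Prod>t<k. of_nat (nn us t choose i1 t)) = (\<Prod>t<k. (1::'k))"
        by (intro prod.cong) (auto simp: i0_def i1_def nus)
      moreover have "(\<Sum>t<k. int (i1 t) *s e2 t) = (\<Sum>t<k. int (if t = r then 1 else 0) *s e2 t)"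
        by (intro sum.cong) (auto simp: i0_def i1_def)
      moreover have "(\<Sum>t<k. int (nn us t - i1 t) *s e1 t) = 0"
        by (intro sum.neutral) (auto simp: i0_def i1_def nus)
      ultimately show ?thesis using w2 sum_delta_e[OF r(1), of e2] by simp
    qed
    have "x us = rmul \<sigma> p e1 e2 k x x us" using idem by simp
    also have "\<dots> = x us + x us" unfolding rmul_u[OF usS] PP using i01 T0 T1 by simp
    finally have eq: "x us + x us = x us" by (rule sym)
    have "x us = 0" using eq by (metis add_cancel_left_right)
    then show False using orbit_nz[OF x usS] usP by blast
  qed
  then show ?thesis by blast
qed

end



context RM begin

lemma perpQ:
  assumes u: "u \<in> perp (qcone (\<tau> \<union> \<gamma>))"
  shows "u \<in> perp \<gamma> \<and> (\<forall>s<k. ipair (p s) u = 0)"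
proof -
  have q: "\<forall>v\<in>qcone (\<tau> \<union> \<gamma>). qdot v (emb u) = 0" using u unfolding perp_def by blast
  have "\<gamma> \<subseteq> qcone (\<tau> \<union> \<gamma>)" using sub_qcone[of "\<tau> \<union> \<gamma>"] by blast
  then have "u \<in> perp \<gamma>" using q unfolding perp_def by blast
  moreover have "ipair (p s) u = 0" if s: "s < k" for s
  proof -
    have "emb (p s) \<in> qcone (\<tau> \<union> \<gamma>)" using sub_qcone[of "\<tau> \<union> \<gamma>"] p_tau[OF s] by blast
    then have "qdot (emb (p s)) (emb u) = 0" using q by blast
    then show ?thesis by (simp add: qdot_emb)
  qed
  ultimately show ?thesis by blast
qed

lemma case3:
  assumes H3: "\<forall>r<k. emb (p r) \<notin> \<gamma> \<longrightarrow> (e1 r \<in> perp \<gamma> \<longleftrightarrow> e2 r \<notin> perp \<gamma>)"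
  shows "{x \<in> (orbit \<sigma> \<gamma> :: (int ^ 'n \<Rightarrow> 'k::field) set). rmul \<sigma> p e1 e2 k x x = x}
       = {x \<in> orbit \<sigma> \<gamma>. \<forall>u \<in> perp (qcone (\<tau> \<union> \<gamma>)) \<inter> Ssg \<sigma>. x u = 1}"
proof (intro equalityI subsetI)
  fix x :: "int ^ 'n \<Rightarrow> 'k"
  assume "x \<in> {x \<in> orbit \<sigma> \<gamma>. rmul \<sigma> p e1 e2 k x x = x}"
  then have x: "x \<in> orbit \<sigma> \<gamma>" and idem: "rmul \<sigma> p e1 e2 k x x = x" by auto
  have "x u = 1" if u: "u \<in> perp (qcone (\<tau> \<union> \<gamma>)) \<inter> Ssg \<sigma>" for u
    using idem_one[OF x idem] perpQ u by blast
  then show "x \<in> {x \<in> orbit \<sigma> \<gamma>. \<forall>u \<in> perp (qcone (\<tau> \<union> \<gamma>)) \<inter> Ssg \<sigma>. x u = 1}" using x by blast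
next
  fix x :: "int ^ 'n \<Rightarrow> 'k"
  assume "x \<in> {x \<in> orbit \<sigma> \<gamma>. \<forall>u \<in> perp (qcone (\<tau> \<union> \<gamma>)) \<inter> Ssg \<sigma>. x u = 1}"
  then have x: "x \<in> orbit \<sigma> \<gamma>" and hx: "\<forall>u \<in> perp (qcone (\<tau> \<union> \<gamma>)) \<inter> Ssg \<sigma>. x u = 1" by auto
  have "rmul \<sigma> p e1 e2 k x x = x"
  proof
    fix u
    show "rmul \<sigma> p e1 e2 k x x u = x u"
    proof (cases "u \<in> Ssg \<sigma>")
      case False then show ?thesis using orbit_out[OF x] by (simp add: rmul_out)
    next
      case uS: True
      show ?thesis
      proof (cases "u \<in> perp \<gamma>")
        case False then show ?thesis using rmul_vanish[OF x uS] orbit_nz[OF x uS] by simp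
      next
        case uP: True
        define istar where "istar = restrict (\<lambda>t. if e2 t \<in> perp \<gamma> then nn u t else 0) {..<k}"
        define T where "T i = (\<Prod>r<k. of_nat (nn u r choose i r)) * x (u + (\<Sum>r<k. int (i r) *s e2 r))
              * x (u + (\<Sum>r<k. int (nn u r - i r) *s e1 r))" for i
        have iS: "istar \<in> PiE {..<k} (\<lambda>r. {..nn u r})" by (auto simp: istar_def PiE_iff)
        have ile: "t < k \<Longrightarrow> istar t \<le> nn u t" for t by (simp add: istar_def)
        have others: "T i = 0" if i: "i \<in> PiE {..<k} (\<lambda>r. {..nn u r}) - {istar}" for i
        proof (rule ccontr)
          assume "T i \<noteq> 0"
          then have xa: "x (u + (\<Sum>r<k. int (i r) *s e2 r)) \<noteq> 0"
            and xb: "x (u + (\<Sum>r<k. int (nn u r - i r) *s e1 r)) \<noteq> 0" by (auto simp: T_def)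
          have iP: "i \<in> PiE {..<k} (\<lambda>r. {..nn u r})" using i by blast
          note S = support[OF x uS iP xa xb]
          have "i = istar"
          proof
            fix t show "i t = istar t"
            proof (cases "t < k")
              case False
              then show ?thesis using iP by (auto simp: istar_def PiE_iff extensional_def)
            next
              case t: True
              have it: "i t \<le> nn u t" using PiE_mem[OF iP, of t] t by simp
              show ?thesis
              proof (cases "emb (p t) \<in> \<gamma>")
                case True then show ?thesis using S t by (simp add: istar_def)
              next
                case nG: False
                show ?thesis
                proof (cases "e2 t \<in> perp \<gamma>")
                  case True
                  then have "e1 t \<notin> perp \<gamma>" using H3 t nG by blast
                  then have "\<not> i t < nn u t" using S t nG by blast
                  then show ?thesis using it True t by (simp add: istar_def)
                next
                  case False
                  then have "\<not> 0 < i t" using S t nG by blast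
                  then show ?thesis using False t by (simp add: istar_def)
                qed
              qed
            qed
          qed
          then show False using i by blast
        qed
        have "rmul \<sigma> p e1 e2 k x x u = (\<Sum>i \<in> PiE {..<k} (\<lambda>r. {..nn u r}). T i)"
          unfolding rmul_u[OF uS] T_def ..
        also have "\<dots> = T istar"
          using others iS by (subst sum.remove[OF _ iS]) (auto intro: finite_PiE sum.neutral)
        also have "\<dots> = x u"
        proof -
          define A where "A = (\<Sum>r<k. int (istar r) *s e2 r)"
          define B where "B = (\<Sum>r<k. int (nn u r - istar r) *s e1 r)"
          define c where "c = u + A + B"
          have P1: "(\<Prod>r<k. of_nat (nn u r choose istar r)) = (1::'k)"
            by (intro prod.neutral) (auto simp: istar_def)
          have L: "int (istar t) + int (nn u t - istar t) = ipair (p t) u" if t: "t < k" for t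
          proof -
            have "int (istar t) + int (nn u t - istar t) = int (nn u t)" using ile[OF t] by (simp add: of_nat_diff)
            then show ?thesis using ipair_u[OF uS t] by linarith
          qed
          have le1: "\<forall>t<k. int (istar t) + int ((\<lambda>_. 0::nat) t) \<le> ipair (p t) u" using L by force
          have le2: "\<forall>t<k. int ((\<lambda>_. 0::nat) t) + int (nn u t - istar t) \<le> ipair (p t) u" using L by force
          have le3: "\<forall>t<k. int (istar t) + int (nn u t - istar t) \<le> ipair (p t) u" using L by force
          have aS: "u + A \<in> Ssg \<sigma>"
            using Ssg_shift[OF uS le1] by (simp add: A_def)
          have bS: "u + B \<in> Ssg \<sigma>"
            using Ssg_shift[OF uS le2] by (simp add: B_def)
          have cS: "c \<in> Ssg \<sigma>"
            using Ssg_shift[OF uS le3] by (simp add: A_def B_def c_def)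
          have cz: "\<forall>t<k. ipair (p t) c = 0"
          proof (intro allI impI)
            fix t assume t: "t < k"
            show "ipair (p t) c = 0"
              using L[OF t] t by (simp add: c_def A_def B_def ipair_add_right ipair_sum_e1 ipair_sum_e2)
          qed
          have cP: "c \<in> perp \<gamma>"
          proof -
            have "A \<in> perp \<gamma>" unfolding A_def
            proof (rule perp_sum)
              fix r assume r: "r \<in> {..<k}"
              show "int (istar r) *s e2 r \<in> perp \<gamma>"
              proof (cases "e2 r \<in> perp \<gamma>")
                case True then show ?thesis by (rule perp_scale)
              next
                case False then have "istar r = 0" using r by (simp add: istar_def)
                then show ?thesis by (simp add: perp_zero)
              qed
            qed
            moreover have "B \<in> perp \<gamma>" unfolding B_def
            proof (rule perp_sum)
              fix r assume r: "r \<in> {..<k}"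
              show "int (nn u r - istar r) *s e1 r \<in> perp \<gamma>"
              proof (cases "nn u r - istar r = 0")
                case True then show ?thesis by (simp add: perp_zero)
              next
                case nz: False
                have "e2 r \<notin> perp \<gamma>" using nz r by (auto simp: istar_def)
                moreover have "emb (p r) \<notin> \<gamma>"
                proof
                  assume "emb (p r) \<in> \<gamma>"
                  then have "ipair (p r) u = 0" using p_perp_zero[OF uP] r by simp
                  then show False using nz by simp
                qed
                ultimately have "e1 r \<in> perp \<gamma>" using H3 r by auto
                then show ?thesis by (rule perp_scale)
              qed
            qed
            ultimately show ?thesis using uP by (simp add: c_def perp_add)
          qed
          have "c \<in> perp (qcone (\<tau> \<union> \<gamma>))"
          proof (rule perp_qcone, intro ballI)
            fix v assume v: "v \<in> \<tau> \<union> \<gamma>"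
            show "qdot v (emb c) = 0"
            proof (cases "v \<in> \<tau>")
              case True then show ?thesis using N3[OF cone sc tau_face tau_rays cz] by blast
            next
              case False then show ?thesis using v cP unfolding perp_def by blast
            qed
          qed
          then have xc: "x c = 1" using hx cS by blast
          have "x (u + A) * x (u + B) = x (u + A + (u + B))" using orbit_mult[OF x aS bS] by simp
          also have "u + A + (u + B) = u + c" by (simp add: c_def algebra_simps)
          also have "x (u + c) = x u" using orbit_mult[OF x uS cS] xc by simp
          finally show ?thesis unfolding T_def P1 A_def B_def by simp
        qed
        finally show ?thesis .
      qed
    qed
  qed
  then show "x \<in> {x \<in> orbit \<sigma> \<gamma>. rmul \<sigma> p e1 e2 k x x = x}" using x by blast
qed

end


theorem mainTheorem6:
  fixes \<sigma> \<tau> \<gamma> :: "(rat ^ 'n::finite) set"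
    and p e1 e2 :: "nat \<Rightarrow> int ^ 'n"
    and k :: nat
  assumes K: "alg_closed_field TYPE('k::field_char_0)"
    and cone: "rat_poly_cone \<sigma>" and sc: "strongly_convex \<sigma>"
    and tau_face: "is_face \<sigma> \<tau>"
    and tau_rays: "prim_ray_gens \<tau> = p ` {..<k}" and p_inj: "inj_on p {..<k}"
    and tau_reg: "part_of_basis p k"
    and roots: "\<forall>r<k. demazure_root \<sigma> (p r) (e1 r) \<and> demazure_root \<sigma> (p r) (e2 r)"
    and compat: "\<forall>r<k. \<forall>s<k. ipair (p s) (e1 r) = (if r = s then -1 else 0)
                             \<and> ipair (p s) (e2 r) = (if r = s then -1 else 0)"
    and gamma_face: "is_face \<sigma> \<gamma>"
  defines "E \<equiv> {x \<in> (orbit \<sigma> \<gamma> :: (int ^ 'n \<Rightarrow> 'k) set). rmul \<sigma> p e1 e2 k x x = x}"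
  shows "(\<tau> \<subseteq> \<gamma> \<longrightarrow> E = {xpt \<sigma> \<gamma>})
       \<and> ((\<exists>r<k. emb (p r) \<notin> \<gamma> \<and>
             ((e1 r \<notin> perp \<gamma> \<and> e2 r \<notin> perp \<gamma>) \<or> (e1 r \<in> perp \<gamma> \<and> e2 r \<in> perp \<gamma>)))
            \<longrightarrow> E = {})
       \<and> ((\<forall>r<k. emb (p r) \<notin> \<gamma> \<longrightarrow> (e1 r \<in> perp \<gamma> \<longleftrightarrow> e2 r \<notin> perp \<gamma>))
            \<longrightarrow> E = {x \<in> orbit \<sigma> \<gamma>. \<forall>u \<in> perp (qcone (\<tau> \<union> \<gamma>)) \<inter> Ssg \<sigma>. x u = 1})"
proof -
  interpret RM \<sigma> \<tau> \<gamma> p e1 e2 k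
    using cone sc tau_face tau_rays roots compat gamma_face by unfold_locales
  have 1: "\<tau> \<subseteq> \<gamma> \<longrightarrow> E = {xpt \<sigma> \<gamma>}" using case1 unfolding E_def by blast
  have 2: "(\<exists>r<k. emb (p r) \<notin> \<gamma> \<and>
             ((e1 r \<notin> perp \<gamma> \<and> e2 r \<notin> perp \<gamma>) \<or> (e1 r \<in> perp \<gamma> \<and> e2 r \<in> perp \<gamma>)))
            \<longrightarrow> E = {}" using case2 unfolding E_def by blast
  have 3: "(\<forall>r<k. emb (p r) \<notin> \<gamma> \<longrightarrow> (e1 r \<in> perp \<gamma> \<longleftrightarrow> e2 r \<notin> perp \<gamma>))
            \<longrightarrow> E = {x \<in> orbit \<sigma> \<gamma>. \<forall>u \<in> perp (qcone (\<tau> \<union> \<gamma>)) \<inter> Ssg \<sigma>. x u = 1}"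
    using case3 unfolding E_def by blast
  show ?thesis using 1 2 3 by blast
qed

end
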